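(* Let $\mathfrak{B}\in\mathfrak{L}_{m,p}$ and let $Q_\Phi$ be a QDF. If $\mathfrak{B}$ is dissipative with respect to $Q_\Phi$, then there exists a storage function for $(\mathfrak{B},Q_\Phi)$ of degree less than $\max\{\deg(Q_\Phi),\ell(\mathfrak{B})\}$.
   Context: Time axis $\mathbb{Z}_+$, $m,p\ge1$, $q=m+p$. $\mathfrak{L}_{m,p}$ is the set of behaviors $\mathfrak{B}=\{w=(u,y):\mathbb{Z}_+\to\mathbb{R}^{q}\mid \exists x:\mathbb{Z}_+\to\mathbb{R}^n,\ x(t+1)=Ax(t)+Bu(t),\ y(t)=Cx(t)+Du(t)\ \forall t\}$ for some real matrices $A,B,C,D$ of compatible sizes ($n\ge0$). The lag $\ell(\mathfrak{B})$ is the smallest $k\ge0$ with $\operatorname{rank}\mathcal{O}_k=\operatorname{rank}\mathcal{O}_{k+1}$, where $\mathcal{O}_k=\operatorname{col}(C,CA,\dots,CA^{k-1})$, for any such representation. A QDF with coefficient matrix $\Psi\in\mathbb{S}^{(M+1)q}$ ($M\ge-1$, $M=-1$ giving the zero QDF) is $Q_\Psi(w)(t)=w_{[t,t+M]}^\top\Psi w_{[t,t+M]}$, with $w_{[t,t+M]}=\operatorname{col}(w(t),\dots,w(t+M))$; its degree is the smallest $d\ge-1$ such that all $q\times q$ blocks $\Psi_{i,j}$ with $i>d$ vanish. $\nabla\Psi:=\begin{bmatrix}0_{q,q}&0\\0&\Psi\end{bmatrix}-\begin{bmatrix}\Psi&0\\0&0_{q,q}\end{bmatrix}$, so $Q_{\nabla\Psi}(w)(t)=Q_\Psi(w)(t+1)-Q_\Psi(w)(t)$.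 Inequalities "on $\mathfrak{B}$" hold for all $w\in\mathfrak{B}$ and all $t$. $\mathfrak{B}$ is dissipative with respect to $Q_\Phi$ if there is a QDF $Q_\Psi$ (a storage function for $(\mathfrak{B},Q_\Phi)$) with $Q_\Psi\ge0$ on $\mathfrak{B}$ and $Q_{\nabla\Psi}\le Q_\Phi$ on $\mathfrak{B}$. *)

theory Defs
  imports "Jordan_Normal_Form.DL_Rank"
begin

(* Signals w : nat => real vec with values in R^q, q = m + p; w = (u,y) with
   u(t) the first m components and y(t) the last p components. *)

definition inp :: "nat \<Rightarrow> real vec \<Rightarrow> real vec" where
  "inp m v = vec m (\<lambda>i. v $ i)"

definition outp :: "nat \<Rightarrow> nat \<Rightarrow> real vec \<Rightarrow> real vec" where
  "outp m p v = vec p (\<lambda>i. v $ (m + i))"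

definition behavior :: "nat \<Rightarrow> nat \<Rightarrow> nat \<Rightarrow> real mat \<Rightarrow> real mat \<Rightarrow> real mat \<Rightarrow> real mat
    \<Rightarrow> (nat \<Rightarrow> real vec) set" where
  "behavior m p n A B C D =
     {w. (\<forall>t. w t \<in> carrier_vec (m + p)) \<and>
         (\<exists>x :: nat \<Rightarrow> real vec. (\<forall>t. x t \<in> carrier_vec n) \<and>
            (\<forall>t. x (Suc t) = A *\<^sub>v x t + B *\<^sub>v inp m (w t) \<and>
                 outp m p (w t) = C *\<^sub>v x t + D *\<^sub>v inp m (w t)))}"

definition is_repr :: "nat \<Rightarrow> nat \<Rightarrow> (nat \<Rightarrow> real vec) set
    \<Rightarrow> nat \<times> real mat \<times> real mat \<times> real mat \<times> real mat \<Rightarrow> bool" where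
  "is_repr m p Bh r = (case r of (n, A, B, C, D) \<Rightarrow>
     A \<in> carrier_mat n n \<and> B \<in> carrier_mat n m \<and> C \<in> carrier_mat p n \<and>
     D \<in> carrier_mat p m \<and> Bh = behavior m p n A B C D)"

definition L_class :: "nat \<Rightarrow> nat \<Rightarrow> (nat \<Rightarrow> real vec) set set" where
  "L_class m p = {Bh. \<exists>r. is_repr m p Bh r}"

(* Observability matrix O_k = col(C, CA, ..., CA^(k-1)), a (k*p) x n matrix *)
definition obs_mat :: "nat \<Rightarrow> nat \<Rightarrow> nat \<Rightarrow> real mat \<Rightarrow> real mat \<Rightarrow> real mat" where
  "obs_mat p n k C A = mat (k * p) n (\<lambda>(i, j). (C * A ^\<^sub>m (i div p)) $$ (i mod p, j))"

definition obs_rank :: "nat \<Rightarrow> nat \<Rightarrow> nat \<Rightarrow> real mat \<Rightarrow> real mat \<Rightarrow> nat" where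
  "obs_rank p n k C A = vec_space.rank (k * p) (obs_mat p n k C A)"

(* Lag: computed from any (here: a chosen) representation; the paper notes
   independence of the representation. *)
definition lag :: "nat \<Rightarrow> nat \<Rightarrow> (nat \<Rightarrow> real vec) set \<Rightarrow> nat" where
  "lag m p Bh = (case (SOME r. is_repr m p Bh r) of (n, A, B, C, D) \<Rightarrow>
      (LEAST k. obs_rank p n k C A = obs_rank p n (Suc k) C A))"

definition is_coeff :: "nat \<Rightarrow> real mat \<Rightarrow> bool" where
  "is_coeff q \<Psi> = ((\<exists>N. \<Psi> \<in> carrier_mat (N * q) (N * q)) \<and> transpose_mat \<Psi> = \<Psi>)"

(* window length N = M + 1 *)
definition wlen :: "nat \<Rightarrow> real mat \<Rightarrow> nat" where
  "wlen q \<Psi> = dim_row \<Psi> div q"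

definition window :: "nat \<Rightarrow> nat \<Rightarrow> (nat \<Rightarrow> real vec) \<Rightarrow> nat \<Rightarrow> real vec" where
  "window q N w t = vec (N * q) (\<lambda>i. w (t + i div q) $ (i mod q))"

definition QDF :: "nat \<Rightarrow> real mat \<Rightarrow> (nat \<Rightarrow> real vec) \<Rightarrow> nat \<Rightarrow> real" where
  "QDF q \<Psi> w t = (let v = window q (wlen q \<Psi>) w t in v \<bullet> (\<Psi> *\<^sub>v v))"

definition qdf_deg :: "nat \<Rightarrow> real mat \<Rightarrow> int" where
  "qdf_deg q \<Psi> = (LEAST d::int. d \<ge> -1 \<and>
     (\<forall>i j a b. i < wlen q \<Psi> \<longrightarrow> j < wlen q \<Psi> \<longrightarrow> a < q \<longrightarrow> b < q \<longrightarrow> int i > d \<longrightarrow>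
        \<Psi> $$ (i * q + a, j * q + b) = 0))"

definition nabla :: "nat \<Rightarrow> real mat \<Rightarrow> real mat" where
  "nabla q \<Psi> =
     four_block_mat (0\<^sub>m q q) (0\<^sub>m q (dim_row \<Psi>)) (0\<^sub>m (dim_row \<Psi>) q) \<Psi>
     - four_block_mat \<Psi> (0\<^sub>m (dim_row \<Psi>) q) (0\<^sub>m q (dim_row \<Psi>)) (0\<^sub>m q q)"

definition storage_function ::
    "nat \<Rightarrow> nat \<Rightarrow> (nat \<Rightarrow> real vec) set \<Rightarrow> real mat \<Rightarrow> real mat \<Rightarrow> bool" where
  "storage_function m p Bh \<Phi> \<Psi> =
     (is_coeff (m + p) \<Psi> \<and>
      (\<forall>w\<in>Bh. \<forall>t. QDF (m + p) \<Psi> w t \<ge> 0) \<and>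
      (\<forall>w\<in>Bh. \<forall>t. QDF (m + p) (nabla (m + p) \<Psi>) w t \<le> QDF (m + p) \<Phi> w t))"

definition dissipative :: "nat \<Rightarrow> nat \<Rightarrow> (nat \<Rightarrow> real vec) set \<Rightarrow> real mat \<Rightarrow> bool" where
  "dissipative m p Bh \<Phi> = (\<exists>\<Psi>. storage_function m p Bh \<Phi> \<Psi>)"

end

theory Submission
  imports Defs
begin

definition kindep :: "'a::field mat \<Rightarrow> nat \<Rightarrow> nat set \<Rightarrow> bool" where
 "kindep M nc J = (\<forall>c \<in> carrier_vec nc. (\<forall>j<nc. j \<notin> J \<longrightarrow> c$j = 0) \<longrightarrow> M *\<^sub>v c = 0\<^sub>v (dim_row M) \<longrightarrow> c = 0\<^sub>v nc)"

lemma (in vec_space) rank_ge_kindep: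
  assumes M: "M \<in> carrier_mat n nc" and J: "J \<subseteq> {..<nc}" and ki: "kindep M nc J"
  shows "card J \<le> rank M"
proof -
  have inj: "inj_on (col M) J"
  proof (rule inj_onI, rule ccontr)
    fix i j assume ij: "i \<in> J" "j \<in> J" "col M i = col M j" "i \<noteq> j"
    define c where "c = vec nc (\<lambda>k. if k = i then (1::'a) else if k = j then -1 else 0)"
    have "M *\<^sub>v c = 0\<^sub>v (dim_row M)"
    proof (rule eq_vecI)
      fix r assume r: "r < dim_vec (0\<^sub>v (dim_row M))"
      have "(M *\<^sub>v c) $ r = (\<Sum>k<nc. M $$ (r,k) * c $ k)"
        using M r by (auto simp: mult_mat_vec_def scalar_prod_def c_def lessThan_atLeast0 intro!: sum.cong)
      also have "\<dots> = M $$ (r,i) - M $$ (r,j)"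
      proof -
        have "(\<Sum>k<nc. M $$ (r,k) * c $ k) = (\<Sum>k<nc. (if k = i then M $$ (r,i) else 0) + (if k = j then - M $$ (r,j) else 0))"
          using ij J by (intro sum.cong) (auto simp: c_def)
        also have "\<dots> = M $$ (r,i) - M $$ (r,j)" using ij J by (simp add: sum.distrib subset_iff)
        finally show ?thesis .
      qed
      also have "\<dots> = 0"
      proof -
        have "col M i $ r = col M j $ r" using ij by simp
        hence "M $$ (r,i) = M $$ (r,j)" using r M ij J by (subst (asm) (1 2) index_col) (auto simp: subset_iff)
        thus ?thesis by simp
      qed
      finally show "(M *\<^sub>v c) $ r = 0\<^sub>v (dim_row M) $ r" using r by simp
    qed (simp)
    moreover have "c \<in> carrier_vec nc" by (simp add: c_def)
    moreover have "\<forall>k<nc. k \<notin> J \<longrightarrow> c$k = 0" using ij by (auto simp: c_def)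
    ultimately have "c = 0\<^sub>v nc" using ki unfolding kindep_def by blast
    moreover have "c $ i = 1" using ij J by (auto simp: c_def)
    ultimately show False using ij J by auto
  qed
  have U: "col M ` J \<subseteq> set (cols M)" using J M by (auto simp: cols_def)
  have li: "lin_indpt (col M ` J)"
  proof
    assume "lin_dep (col M ` J)"
    then obtain A a v where A: "finite A" "A \<subseteq> col M ` J" "True"
      "lincomb a A = 0\<^sub>v n" "v \<in> A" "a v \<noteq> 0"
      unfolding lin_dep_def by (elim exE conjE) (rule that, assumption+)
    define c where "c = vec nc (\<lambda>k. if k \<in> J \<and> col M k \<in> A then a (col M k) else 0)"
    have Acar: "A \<subseteq> carrier_vec n" using A(2) U M cols_dim by blast
    have "M *\<^sub>v c = 0\<^sub>v (dim_row M)"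
    proof (rule eq_vecI)
      fix r assume r: "r < dim_vec (0\<^sub>v (dim_row M))"
      have "(M *\<^sub>v c) $ r = (\<Sum>k<nc. M $$ (r,k) * c $ k)"
        using M r by (auto simp: mult_mat_vec_def scalar_prod_def c_def lessThan_atLeast0 intro!: sum.cong)
      also have "\<dots> = (\<Sum>k\<in>{k\<in>J. col M k \<in> A}. a (col M k) * col M k $ r)"
      proof -
        have "(\<Sum>k<nc. M $$ (r,k) * c $ k) = (\<Sum>k\<in>{k\<in>J. col M k \<in> A}. M $$ (r,k) * c $ k)"
          using J by (intro sum.mono_neutral_right) (auto simp: c_def)
        also have "\<dots> = (\<Sum>k\<in>{k\<in>J. col M k \<in> A}. a (col M k) * col M k $ r)"
          using J M r by (intro sum.cong) (auto simp: c_def col_def)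
        finally show ?thesis .
      qed
      also have "\<dots> = (\<Sum>x\<in>A. a x * x $ r)"
      proof -
        have "A = col M ` {k\<in>J. col M k \<in> A}" using A(2) by blast
        moreover have "inj_on (col M) {k\<in>J. col M k \<in> A}" using inj by (rule inj_on_subset) auto
        ultimately show ?thesis by (simp add: sum.reindex_cong[of "col M"])
      qed
      also have "\<dots> = lincomb a A $ r" using lincomb_index[of r A a] r M Acar by simp
      also have "\<dots> = 0" using A(4) r M by simp
      finally show "(M *\<^sub>v c) $ r = 0\<^sub>v (dim_row M) $ r" using r by simp
    qed simp
    moreover have "c \<in> carrier_vec nc" by (simp add: c_def)
    moreover have "\<forall>k<nc. k \<notin> J \<longrightarrow> c$k = 0" by (auto simp: c_def)
    ultimately have c0: "c = 0\<^sub>v nc" using ki unfolding kindep_def by blast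
    obtain k where k: "k \<in> J" "v = col M k" using A(2,5) by blast
    have "k < nc" using k J by auto
    hence "c $ k = a v" using k A(5) by (simp add: c_def)
    moreover have "c $ k = 0" using c0 \<open>k < nc\<close> by simp
    ultimately have "a v = 0" by simp
    thus False using A(6) by simp
  qed
  have "rank M \<ge> card (col M ` J)" by (rule rank_ge_card_indpt[OF M U li])
  thus ?thesis using card_image[OF inj] by simp
qed

lemma (in vec_space) rank_kindep_exists:
  assumes M: "M \<in> carrier_mat n nc"
  shows "\<exists>J. J \<subseteq> {..<nc} \<and> card J = rank M \<and> kindep M nc J"
proof -
  obtain S where S: "maximal S (\<lambda>T. T \<subseteq> set (cols M) \<and> lin_indpt T)"
    using maximal_exists[of "(\<lambda>T. T \<subseteq> set (cols M) \<and> lin_indpt T)" "card (set (cols M))" "{}"]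
    by (meson List.finite_set card_mono empty_iff empty_subsetI finite_lin_indpt2 rev_finite_subset)
  have rk: "rank M = card S" by (rule rank_card_indpt[OF M S])
  have SC: "S \<subseteq> set (cols M)" and Sli: "lin_indpt S" using S unfolding maximal_def by auto
  have fS: "finite S" using SC finite_subset by blast
  have "\<forall>s\<in>S. \<exists>j<nc. col M j = s" using SC M by (force simp: cols_def)
  then obtain idx where idx: "\<And>s. s \<in> S \<Longrightarrow> idx s < nc \<and> col M (idx s) = s" by metis
  define J where "J = idx ` S"
  have inj: "inj_on idx S" by (metis idx inj_onI)
  have injc: "inj_on (col M) J" unfolding J_def using idx by (auto intro!: inj_onI)
  have Jsub: "J \<subseteq> {..<nc}" using idx by (auto simp: J_def)
  have cJ: "card J = card S" unfolding J_def by (rule card_image[OF inj])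
  have Scar: "S \<subseteq> carrier_vec n" using SC M cols_dim by blast
  have "kindep M nc J"
    unfolding kindep_def
  proof (intro ballI impI, rule ccontr)
    fix c :: "'a vec" assume c: "c \<in> carrier_vec nc" "\<forall>j<nc. j \<notin> J \<longrightarrow> c $ j = 0"
      "M *\<^sub>v c = 0\<^sub>v (dim_row M)" "c \<noteq> 0\<^sub>v nc"
    define a where "a = (\<lambda>s. c $ idx s)"
    have lc: "lincomb a S = 0\<^sub>v n"
    proof (rule eq_vecI)
      show "dim_vec (lincomb a S) = dim_vec (0\<^sub>v n)" using lincomb_dim[OF fS Scar] by simp
      fix r assume r: "r < dim_vec (0\<^sub>v n)"
      hence r': "r < n" by simp
      have sr: "\<And>s. s\<in>S \<Longrightarrow> s $ r = M $$ (r, idx s)"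
      proof -
        fix s assume "s \<in> S"
        hence "col M (idx s) = s" "idx s < nc" using idx by auto
        thus "s $ r = M $$ (r, idx s)" using M r' by (metis index_col carrier_matD)
      qed
      have "lincomb a S $ r = (\<Sum>s\<in>S. a s * s $ r)" by (rule lincomb_index[OF r' Scar])
      also have "\<dots> = (\<Sum>j\<in>J. c $ j * M $$ (r, j))"
        unfolding J_def using sr by (subst sum.reindex[OF inj]) (auto simp: a_def intro!: sum.cong)
      also have "\<dots> = (\<Sum>j<nc. c $ j * M $$ (r, j))"
        using Jsub c(2) by (intro sum.mono_neutral_left) auto
      also have "\<dots> = (M *\<^sub>v c) $ r"
        using M r' c(1) by (auto simp: mult_mat_vec_def scalar_prod_def lessThan_atLeast0 mult.commute intro!: sum.cong)
      also have "\<dots> = 0" using c(3) r' M by simp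
      finally show "lincomb a S $ r = 0\<^sub>v n $ r" using r' by simp
    qed
    obtain j where j: "j < nc" "c $ j \<noteq> 0" using c(1,4) by (metis carrier_vecD eq_vecI index_zero_vec(1,2))
    hence "j \<in> J" using c(2) by blast
    then obtain s where s: "s \<in> S" "j = idx s" unfolding J_def by blast
    have "lin_dep S"
      unfolding lin_dep_def
      by (rule exI[of _ S], rule exI[of _ a], rule exI[of _ s]) (use fS lc s j in \<open>auto simp: a_def\<close>)
    thus False using Sli by simp
  qed
  thus ?thesis using Jsub cJ rk by auto
qed

lemma rank_mono_ker:
  fixes M1 M2 :: "'a::field mat"
  assumes M1: "M1 \<in> carrier_mat r1 n" and M2: "M2 \<in> carrier_mat r2 n"
    and ker: "\<And>x. x \<in> carrier_vec n \<Longrightarrow> M2 *\<^sub>v x = 0\<^sub>v r2 \<Longrightarrow> M1 *\<^sub>v x = 0\<^sub>v r1"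
  shows "vec_space.rank r1 M1 \<le> vec_space.rank r2 M2"
proof -
  obtain J where J: "J \<subseteq> {..<n}" "card J = vec_space.rank r1 M1" "kindep M1 n J"
    using vec_space.rank_kindep_exists[OF M1] by blast
  have "kindep M2 n J" using J(3) ker M1 M2 unfolding kindep_def by auto
  thus ?thesis using vec_space.rank_ge_kindep[OF M2 J(1)] J(2) by simp
qed

lemma mult_vec_index_sum:
  assumes M: "M \<in> carrier_mat r n" and i: "i < r" and v: "v \<in> carrier_vec n"
  shows "(M *\<^sub>v v) $ i = (\<Sum>k<n. M $$ (i,k) * v $ k)"
  using M i v by (auto simp: index_mult_mat_vec scalar_prod_def lessThan_atLeast0 intro!: sum.cong)

lemma mult_vec_comb:
  fixes M :: "'a::field mat"
  assumes M: "M \<in> carrier_mat r n" and x: "x \<in> carrier_vec n" and i: "i < r"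
    and c: "\<And>j. j \<in> K \<Longrightarrow> c j \<in> carrier_vec n" and K: "finite K"
  shows "(M *\<^sub>v vec n (\<lambda>k. x $ k - (\<Sum>j\<in>K. f j * c j $ k))) $ i
       = (M *\<^sub>v x) $ i - (\<Sum>j\<in>K. f j * (M *\<^sub>v c j) $ i)"
proof -
  have "(M *\<^sub>v vec n (\<lambda>k. x $ k - (\<Sum>j\<in>K. f j * c j $ k))) $ i
      = (\<Sum>k<n. M $$ (i,k) * (x $ k - (\<Sum>j\<in>K. f j * c j $ k)))"
    by (subst mult_vec_index_sum[OF M i]) auto
  also have "\<dots> = (\<Sum>k<n. M $$ (i,k) * x $ k) - (\<Sum>j\<in>K. f j * (\<Sum>k<n. M $$ (i,k) * c j $ k))"
    by (simp add: right_diff_distrib sum_subtractf sum_distrib_left sum.swap[of _ K] mult.left_commute)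
  also have "\<dots> = (M *\<^sub>v x) $ i - (\<Sum>j\<in>K. f j * (M *\<^sub>v c j) $ i)"
    using mult_vec_index_sum[OF M i] x c by simp
  finally show ?thesis .
qed

lemma rank_eq_ker:
  fixes M1 M2 :: "'a::field mat"
  assumes M1: "M1 \<in> carrier_mat r1 n" and M2: "M2 \<in> carrier_mat r2 n"
    and ker: "\<And>x. x \<in> carrier_vec n \<Longrightarrow> M2 *\<^sub>v x = 0\<^sub>v r2 \<Longrightarrow> M1 *\<^sub>v x = 0\<^sub>v r1"
    and rk: "vec_space.rank r1 M1 = vec_space.rank r2 M2"
    and x: "x \<in> carrier_vec n" and x0: "M1 *\<^sub>v x = 0\<^sub>v r1"
  shows "M2 *\<^sub>v x = 0\<^sub>v r2"
proof -
  obtain J where J: "J \<subseteq> {..<n}" "card J = vec_space.rank r1 M1" "kindep M1 n J"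
    using vec_space.rank_kindep_exists[OF M1] by blast
  have J2: "kindep M2 n J" using J(3) ker M1 M2 unfolding kindep_def by auto
  define Jc where "Jc = {..<n} - J"
  have "\<forall>j\<in>Jc. \<exists>c. c \<in> carrier_vec n \<and> (\<forall>k<n. k \<notin> J \<and> k \<noteq> j \<longrightarrow> c $ k = 0) \<and>
          M2 *\<^sub>v c = 0\<^sub>v r2 \<and> c $ j \<noteq> 0"
  proof
    fix j assume j: "j \<in> Jc"
    have "\<not> kindep M2 n (insert j J)"
    proof
      assume "kindep M2 n (insert j J)"
      hence "card (insert j J) \<le> vec_space.rank r2 M2"
        using vec_space.rank_ge_kindep[OF M2, of "insert j J"] j J(1) by (auto simp: Jc_def)
      moreover have "card (insert j J) = card J + 1"
        using j J(1) finite_subset[OF J(1)] by (auto simp: Jc_def)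
      ultimately show False using J(2) rk by simp
    qed
    then obtain c where c: "c \<in> carrier_vec n" "\<forall>k<n. k \<notin> insert j J \<longrightarrow> c $ k = 0"
      "M2 *\<^sub>v c = 0\<^sub>v (dim_row M2)" "c \<noteq> 0\<^sub>v n" unfolding kindep_def by blast
    have "c $ j \<noteq> 0"
    proof
      assume "c $ j = 0"
      hence "\<forall>k<n. k \<notin> J \<longrightarrow> c $ k = 0" using c(2) by auto
      thus False using J2 c unfolding kindep_def by blast
    qed
    thus "\<exists>c. c \<in> carrier_vec n \<and> (\<forall>k<n. k \<notin> J \<and> k \<noteq> j \<longrightarrow> c $ k = 0) \<and>
          M2 *\<^sub>v c = 0\<^sub>v r2 \<and> c $ j \<noteq> 0" using c M2 by (intro exI[of _ c]) auto
  qed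
  then obtain cc where cc: "\<And>j. j \<in> Jc \<Longrightarrow> cc j \<in> carrier_vec n \<and> (\<forall>k<n. k \<notin> J \<and> k \<noteq> j \<longrightarrow> cc j $ k = 0) \<and>
          M2 *\<^sub>v cc j = 0\<^sub>v r2 \<and> cc j $ j \<noteq> 0" by metis
  define f where "f = (\<lambda>j. x $ j / cc j $ j)"
  define x' where "x' = vec n (\<lambda>k. x $ k - (\<Sum>j\<in>Jc. f j * cc j $ k))"
  have fJc: "finite Jc" by (simp add: Jc_def)
  have ccar: "\<And>j. j \<in> Jc \<Longrightarrow> cc j \<in> carrier_vec n" using cc by blast
  have x'c: "x' \<in> carrier_vec n" by (simp add: x'_def)
  have M1cc: "\<And>j. j \<in> Jc \<Longrightarrow> M1 *\<^sub>v cc j = 0\<^sub>v r1" using cc ker by blast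
  have supp: "\<forall>k<n. k \<notin> J \<longrightarrow> x' $ k = 0"
  proof (intro allI impI)
    fix k assume k: "k < n" "k \<notin> J"
    hence kJ: "k \<in> Jc" by (simp add: Jc_def)
    have "(\<Sum>j\<in>Jc. f j * cc j $ k) = f k * cc k $ k + (\<Sum>j\<in>Jc - {k}. f j * cc j $ k)"
      by (rule sum.remove[OF fJc kJ])
    moreover have "(\<Sum>j\<in>Jc - {k}. f j * cc j $ k) = 0"
      by (rule sum.neutral) (use cc k in \<open>auto simp: Jc_def\<close>)
    ultimately have "(\<Sum>j\<in>Jc. f j * cc j $ k) = f k * cc k $ k" by simp
    thus "x' $ k = 0" using k kJ cc by (simp add: x'_def f_def)
  qed
  have "M1 *\<^sub>v x' = 0\<^sub>v r1"
  proof (rule eq_vecI)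
    fix i assume i: "i < dim_vec (0\<^sub>v r1)"
    have "(M1 *\<^sub>v x') $ i = (M1 *\<^sub>v x) $ i - (\<Sum>j\<in>Jc. f j * (M1 *\<^sub>v cc j) $ i)"
      unfolding x'_def using mult_vec_comb[OF M1 x _ ccar fJc] i by simp
    thus "(M1 *\<^sub>v x') $ i = 0\<^sub>v r1 $ i" using x0 M1cc i by simp
  qed (use M1 in simp)
  hence "x' = 0\<^sub>v n" using J(3) x'c supp M1 unfolding kindep_def by auto
  show "M2 *\<^sub>v x = 0\<^sub>v r2"
  proof (rule eq_vecI)
    fix i assume i: "i < dim_vec (0\<^sub>v r2)"
    have "(M2 *\<^sub>v x') $ i = (M2 *\<^sub>v x) $ i - (\<Sum>j\<in>Jc. f j * (M2 *\<^sub>v cc j) $ i)"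
      unfolding x'_def using mult_vec_comb[OF M2 x _ ccar fJc] i by simp
    moreover have "(M2 *\<^sub>v x') $ i = 0" using \<open>x' = 0\<^sub>v n\<close> i M2 by simp
    ultimately show "(M2 *\<^sub>v x) $ i = 0\<^sub>v r2 $ i" using cc i by simp
  qed (use M2 in simp)
qed

lemma pow_mat_add:
  assumes A: "A \<in> carrier_mat n n"
  shows "A ^\<^sub>m (a + b) = A ^\<^sub>m a * A ^\<^sub>m b"
proof (induction b)
  case 0 thus ?case using A by simp
next
  case (Suc b)
  have "A ^\<^sub>m (a + Suc b) = (A ^\<^sub>m a * A ^\<^sub>m b) * A" using Suc by simp
  also have "\<dots> = A ^\<^sub>m a * (A ^\<^sub>m b * A)" using A by (intro assoc_mult_mat) auto
  finally show ?case by simp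
qed

lemma obs_mat_carrier: "obs_mat p n k C A \<in> carrier_mat (k * p) n"
  by (simp add: obs_mat_def)

lemma obs_mat_zero_iff:
  fixes C A :: "real mat"
  assumes p: "p > 0" and C: "C \<in> carrier_mat p n" and A: "A \<in> carrier_mat n n"
    and x: "x \<in> carrier_vec n"
  shows "(obs_mat p n k C A *\<^sub>v x = 0\<^sub>v (k * p)) \<longleftrightarrow> (\<forall>j<k. (C * A ^\<^sub>m j) *\<^sub>v x = 0\<^sub>v p)"
proof -
  have idx: "(obs_mat p n k C A *\<^sub>v x) $ i = ((C * A ^\<^sub>m (i div p)) *\<^sub>v x) $ (i mod p)" if i: "i < k * p" for i
  proof -
    have CA: "C * A ^\<^sub>m (i div p) \<in> carrier_mat p n" using C A by simp
    have im: "i mod p < p" using p by simp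
    have "(obs_mat p n k C A *\<^sub>v x) $ i = (\<Sum>c<n. obs_mat p n k C A $$ (i,c) * x $ c)"
      by (rule mult_vec_index_sum[OF obs_mat_carrier i x])
    also have "\<dots> = (\<Sum>c<n. (C * A ^\<^sub>m (i div p)) $$ (i mod p, c) * x $ c)"
      using i by (intro sum.cong) (auto simp: obs_mat_def)
    also have "\<dots> = ((C * A ^\<^sub>m (i div p)) *\<^sub>v x) $ (i mod p)"
      by (rule mult_vec_index_sum[OF CA im x, symmetric])
    finally show ?thesis .
  qed
  show ?thesis
  proof
    assume z: "obs_mat p n k C A *\<^sub>v x = 0\<^sub>v (k * p)"
    show "\<forall>j<k. (C * A ^\<^sub>m j) *\<^sub>v x = 0\<^sub>v p"
    proof (intro allI impI eq_vecI)
      fix j a assume j: "j < k" and a: "a < dim_vec (0\<^sub>v p)"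
      have a': "a < p" using a by simp
      have i: "j * p + a < k * p"
      proof -
        have "j * p + a < j * p + p" using a' by simp
        also have "\<dots> = Suc j * p" by simp
        also have "\<dots> \<le> k * p" using j by (intro mult_right_mono) auto
        finally show ?thesis .
      qed
      have "(j * p + a) div p = j" "(j * p + a) mod p = a" using a' p by auto
      hence "((C * A ^\<^sub>m j) *\<^sub>v x) $ a = (obs_mat p n k C A *\<^sub>v x) $ (j * p + a)" using idx[OF i] by simp
      also have "\<dots> = 0" using z i by simp
      finally show "((C * A ^\<^sub>m j) *\<^sub>v x) $ a = 0\<^sub>v p $ a" using a' by simp
    qed (use C A in simp)
  next
    assume z: "\<forall>j<k. (C * A ^\<^sub>m j) *\<^sub>v x = 0\<^sub>v p"
    show "obs_mat p n k C A *\<^sub>v x = 0\<^sub>v (k * p)"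
    proof (rule eq_vecI)
      fix i assume i: "i < dim_vec (0\<^sub>v (k * p))"
      hence i': "i < k * p" by simp
      have "i div p < k" using i' by (simp add: less_mult_imp_div_less)
      hence "(C * A ^\<^sub>m (i div p)) *\<^sub>v x = 0\<^sub>v p" using z by simp
      moreover have "i mod p < p" using p by simp
      ultimately show "(obs_mat p n k C A *\<^sub>v x) $ i = 0\<^sub>v (k * p) $ i" using idx[OF i'] i' by simp
    qed (simp add: obs_mat_def)
  qed
qed

lemma obs_ker_Suc:
  fixes C A :: "real mat"
  assumes p: "p > 0" and C: "C \<in> carrier_mat p n" and A: "A \<in> carrier_mat n n"
    and x: "x \<in> carrier_vec n" and z: "obs_mat p n (Suc k) C A *\<^sub>v x = 0\<^sub>v (Suc k * p)"
  shows "obs_mat p n k C A *\<^sub>v x = 0\<^sub>v (k * p)"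
proof -
  have "\<forall>j<Suc k. (C * A ^\<^sub>m j) *\<^sub>v x = 0\<^sub>v p" using z obs_mat_zero_iff[OF p C A x] by blast
  hence "\<forall>j<k. (C * A ^\<^sub>m j) *\<^sub>v x = 0\<^sub>v p" by simp
  thus "obs_mat p n k C A *\<^sub>v x = 0\<^sub>v (k * p)" using obs_mat_zero_iff[OF p C A x] by blast
qed

lemma obs_rank_mono:
  fixes C A :: "real mat"
  assumes p: "p > 0" and C: "C \<in> carrier_mat p n" and A: "A \<in> carrier_mat n n"
  shows "obs_rank p n k C A \<le> obs_rank p n (Suc k) C A"
  unfolding obs_rank_def
proof (rule rank_mono_ker[OF obs_mat_carrier obs_mat_carrier])
  fix x :: "real vec" assume x: "x \<in> carrier_vec n"
    and z: "obs_mat p n (Suc k) C A *\<^sub>v x = 0\<^sub>v (Suc k * p)"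
  have "\<forall>j<Suc k. (C * A ^\<^sub>m j) *\<^sub>v x = 0\<^sub>v p" using z obs_mat_zero_iff[OF p C A x] by blast
  hence "\<forall>j<k. (C * A ^\<^sub>m j) *\<^sub>v x = 0\<^sub>v p" by simp
  thus "obs_mat p n k C A *\<^sub>v x = 0\<^sub>v (k * p)" using obs_mat_zero_iff[OF p C A x] by blast
qed

lemma obs_rank_le: "obs_rank p n k C A \<le> n"
  unfolding obs_rank_def by (rule vec_space.rank_le_nc[OF obs_mat_carrier])

lemma obs_rank_stab_ex:
  fixes C A :: "real mat"
  assumes p: "p > 0" and C: "C \<in> carrier_mat p n" and A: "A \<in> carrier_mat n n"
  shows "\<exists>k. obs_rank p n k C A = obs_rank p n (Suc k) C A"
proof (rule ccontr)
  assume "\<not> ?thesis"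
  hence lt: "\<And>k. obs_rank p n k C A < obs_rank p n (Suc k) C A"
    using obs_rank_mono[OF p C A] le_neq_implies_less by blast
  have "k \<le> obs_rank p n k C A" for k
  proof (induction k)
    case (Suc k) thus ?case using lt[of k] by simp
  qed simp
  from this[of "Suc n"] show False using obs_rank_le[of p n "Suc n" C A] by simp
qed

lemma obs_ker_stab:
  fixes C A :: "real mat"
  assumes p: "p > 0" and C: "C \<in> carrier_mat p n" and A: "A \<in> carrier_mat n n"
    and l: "l = (LEAST k. obs_rank p n k C A = obs_rank p n (Suc k) C A)"
    and L: "l \<le> L" and x: "x \<in> carrier_vec n"
    and z: "\<forall>j<L. (C * A ^\<^sub>m j) *\<^sub>v x = 0\<^sub>v p"
  shows "(C * A ^\<^sub>m L) *\<^sub>v x = 0\<^sub>v p"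
proof -
  have eq: "obs_rank p n l C A = obs_rank p n (Suc l) C A"
    unfolding l using obs_rank_stab_ex[OF p C A] by (rule LeastI_ex)
  define y where "y = A ^\<^sub>m (L - l) *\<^sub>v x"
  have y: "y \<in> carrier_vec n" unfolding y_def by (rule mult_mat_vec_carrier[OF pow_carrier_mat[OF A] x])
  have CAy: "(C * A ^\<^sub>m j) *\<^sub>v y = (C * A ^\<^sub>m (j + (L - l))) *\<^sub>v x" for j
  proof -
    have "(C * A ^\<^sub>m j) *\<^sub>v y = ((C * A ^\<^sub>m j) * A ^\<^sub>m (L - l)) *\<^sub>v x"
      unfolding y_def using C A x by (intro assoc_mult_mat_vec[symmetric]) auto
    also have "(C * A ^\<^sub>m j) * A ^\<^sub>m (L - l) = C * A ^\<^sub>m (j + (L - l))"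
      using C A by (simp add: pow_mat_add[OF A] assoc_mult_mat[of C p n _ n _ n])
    finally show ?thesis .
  qed
  have "\<forall>j<l. (C * A ^\<^sub>m j) *\<^sub>v y = 0\<^sub>v p" using z L by (simp add: CAy)
  hence "obs_mat p n l C A *\<^sub>v y = 0\<^sub>v (l * p)" using obs_mat_zero_iff[OF p C A y] by simp
  moreover have kk: "\<And>x. x \<in> carrier_vec n \<Longrightarrow> obs_mat p n (Suc l) C A *\<^sub>v x = 0\<^sub>v (Suc l * p) \<Longrightarrow> obs_mat p n l C A *\<^sub>v x = 0\<^sub>v (l * p)"
    using obs_ker_Suc[OF p C A] by blast
  moreover have rk: "vec_space.rank (l*p) (obs_mat p n l C A) = vec_space.rank (Suc l * p) (obs_mat p n (Suc l) C A)"
    using eq unfolding obs_rank_def .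
  ultimately have "obs_mat p n (Suc l) C A *\<^sub>v y = 0\<^sub>v (Suc l * p)"
    using rank_eq_ker[OF obs_mat_carrier obs_mat_carrier kk rk y] by blast
  hence "\<forall>j<Suc l. (C * A ^\<^sub>m j) *\<^sub>v y = 0\<^sub>v p" using obs_mat_zero_iff[OF p C A y] by blast
  hence "(C * A ^\<^sub>m l) *\<^sub>v y = 0\<^sub>v p" by blast
  thus ?thesis using L by (simp add: CAy)
qed


definition mkw :: "nat \<Rightarrow> nat \<Rightarrow> real vec \<Rightarrow> real vec \<Rightarrow> real vec" where
  "mkw m p u y = vec (m + p) (\<lambda>i. if i < m then u $ i else y $ (i - m))"

lemma mkw_carrier[simp]: "mkw m p u y \<in> carrier_vec (m + p)" by (simp add: mkw_def)
lemma inp_mkw[simp]: "u \<in> carrier_vec m \<Longrightarrow> inp m (mkw m p u y) = u"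
  by (auto simp: inp_def mkw_def)
lemma outp_mkw[simp]: "y \<in> carrier_vec p \<Longrightarrow> outp m p (mkw m p u y) = y"
  by (auto simp: outp_def mkw_def)
lemma inp_carrier[simp]: "inp m v \<in> carrier_vec m" by (simp add: inp_def)
lemma outp_carrier[simp]: "outp m p v \<in> carrier_vec p" by (simp add: outp_def)
lemma inp_zero[simp]: "inp m (0\<^sub>v (m + p)) = 0\<^sub>v m" by (auto simp: inp_def)

definition comb :: "(nat \<Rightarrow> real vec) \<Rightarrow> real \<Rightarrow> (nat \<Rightarrow> real vec) \<Rightarrow> nat \<Rightarrow> real vec" where
  "comb w c w' = (\<lambda>t. w t + c \<cdot>\<^sub>v w' t)"

lemma inp_comb: "v \<in> carrier_vec (m + p) \<Longrightarrow> v' \<in> carrier_vec (m + p) \<Longrightarrow>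
   inp m (v + c \<cdot>\<^sub>v v') = inp m v + c \<cdot>\<^sub>v inp m v'"
  by (auto simp: inp_def)
lemma outp_comb: "v \<in> carrier_vec (m + p) \<Longrightarrow> v' \<in> carrier_vec (m + p) \<Longrightarrow>
   outp m p (v + c \<cdot>\<^sub>v v') = outp m p v + c \<cdot>\<^sub>v outp m p v'"
  by (auto simp: outp_def)

lemma vec_alg:
  fixes a b d e :: "'a::comm_ring_1 vec"
  assumes "a \<in> carrier_vec k" "b \<in> carrier_vec k" "d \<in> carrier_vec k" "e \<in> carrier_vec k"
  shows "(a + b) + c \<cdot>\<^sub>v (d + e) = (a + c \<cdot>\<^sub>v d) + (b + c \<cdot>\<^sub>v e)"
  using assms by (intro eq_vecI) (auto simp: algebra_simps)

lemma behavior_comb: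
  assumes A: "A \<in> carrier_mat n n" and B: "B \<in> carrier_mat n m" and C: "C \<in> carrier_mat p n"
    and D: "D \<in> carrier_mat p m"
    and w: "w \<in> behavior m p n A B C D" and w': "w' \<in> behavior m p n A B C D"
  shows "comb w c w' \<in> behavior m p n A B C D"
proof -
  obtain x where x: "\<forall>t. x t \<in> carrier_vec n" "\<forall>t. x (Suc t) = A *\<^sub>v x t + B *\<^sub>v inp m (w t) \<and>
                 outp m p (w t) = C *\<^sub>v x t + D *\<^sub>v inp m (w t)" and wc: "\<forall>t. w t \<in> carrier_vec (m + p)"
    using w unfolding behavior_def by blast
  obtain x' where x': "\<forall>t. x' t \<in> carrier_vec n" "\<forall>t. x' (Suc t) = A *\<^sub>v x' t + B *\<^sub>v inp m (w' t) \<and>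
                 outp m p (w' t) = C *\<^sub>v x' t + D *\<^sub>v inp m (w' t)" and wc': "\<forall>t. w' t \<in> carrier_vec (m + p)"
    using w' unfolding behavior_def by blast
  define z where "z = (\<lambda>t. x t + c \<cdot>\<^sub>v x' t)"
  have zc: "\<forall>t. z t \<in> carrier_vec n" using x x' by (simp add: z_def)
  have "\<forall>t. z (Suc t) = A *\<^sub>v z t + B *\<^sub>v inp m (comb w c w' t) \<and>
                 outp m p (comb w c w' t) = C *\<^sub>v z t + D *\<^sub>v inp m (comb w c w' t)"
  proof
    fix t
    have i: "inp m (comb w c w' t) = inp m (w t) + c \<cdot>\<^sub>v inp m (w' t)"
      unfolding comb_def by (rule inp_comb) (use wc wc' in auto)
    have o: "outp m p (comb w c w' t) = outp m p (w t) + c \<cdot>\<^sub>v outp m p (w' t)"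
      unfolding comb_def by (rule outp_comb) (use wc wc' in auto)
    have xt: "x t \<in> carrier_vec n" "x' t \<in> carrier_vec n" using x x' by auto
    have 1: "A *\<^sub>v z t = A *\<^sub>v x t + c \<cdot>\<^sub>v (A *\<^sub>v x' t)"
      unfolding z_def using mult_add_distrib_mat_vec[OF A xt(1), of "c \<cdot>\<^sub>v x' t"] mult_mat_vec[OF A xt(2)] xt by simp
    have 2: "B *\<^sub>v inp m (comb w c w' t) = B *\<^sub>v inp m (w t) + c \<cdot>\<^sub>v (B *\<^sub>v inp m (w' t))"
      unfolding i using mult_add_distrib_mat_vec[OF B inp_carrier, of "c \<cdot>\<^sub>v inp m (w' t)"] mult_mat_vec[OF B inp_carrier] by simp
    have 3: "C *\<^sub>v z t = C *\<^sub>v x t + c \<cdot>\<^sub>v (C *\<^sub>v x' t)"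
      unfolding z_def using mult_add_distrib_mat_vec[OF C xt(1), of "c \<cdot>\<^sub>v x' t"] mult_mat_vec[OF C xt(2)] xt by simp
    have 4: "D *\<^sub>v inp m (comb w c w' t) = D *\<^sub>v inp m (w t) + c \<cdot>\<^sub>v (D *\<^sub>v inp m (w' t))"
      unfolding i using mult_add_distrib_mat_vec[OF D inp_carrier, of "c \<cdot>\<^sub>v inp m (w' t)"] mult_mat_vec[OF D inp_carrier] by simp
    show "z (Suc t) = A *\<^sub>v z t + B *\<^sub>v inp m (comb w c w' t) \<and>
                 outp m p (comb w c w' t) = C *\<^sub>v z t + D *\<^sub>v inp m (comb w c w' t)"
    proof
      have "z (Suc t) = (A *\<^sub>v x t + B *\<^sub>v inp m (w t)) + c \<cdot>\<^sub>v (A *\<^sub>v x' t + B *\<^sub>v inp m (w' t))"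
        using x x' by (simp add: z_def)
      also have "\<dots> = (A *\<^sub>v x t + c \<cdot>\<^sub>v (A *\<^sub>v x' t)) + (B *\<^sub>v inp m (w t) + c \<cdot>\<^sub>v (B *\<^sub>v inp m (w' t)))"
        by (rule vec_alg[where k=n]) (use A B xt in auto)
      finally show "z (Suc t) = A *\<^sub>v z t + B *\<^sub>v inp m (comb w c w' t)" unfolding 1 2 .
      have "outp m p (comb w c w' t) = (C *\<^sub>v x t + D *\<^sub>v inp m (w t)) + c \<cdot>\<^sub>v (C *\<^sub>v x' t + D *\<^sub>v inp m (w' t))"
        using x x' o by simp
      also have "\<dots> = (C *\<^sub>v x t + c \<cdot>\<^sub>v (C *\<^sub>v x' t)) + (D *\<^sub>v inp m (w t) + c \<cdot>\<^sub>v (D *\<^sub>v inp m (w' t)))"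
        by (rule vec_alg[where k=p]) (use C D xt in auto)
      finally show "outp m p (comb w c w' t) = C *\<^sub>v z t + D *\<^sub>v inp m (comb w c w' t)" unfolding 3 4 .
    qed
  qed
  moreover have "\<forall>t. comb w c w' t \<in> carrier_vec (m + p)" using wc wc' by (simp add: comb_def)
  ultimately show ?thesis unfolding behavior_def using zc by blast
qed

lemma behavior_shift:
  assumes w: "w \<in> behavior m p n A B C D"
  shows "(\<lambda>t. w (t + k)) \<in> behavior m p n A B C D"
proof -
  obtain x where x: "\<forall>t. x t \<in> carrier_vec n" "\<forall>t. x (Suc t) = A *\<^sub>v x t + B *\<^sub>v inp m (w t) \<and>
                 outp m p (w t) = C *\<^sub>v x t + D *\<^sub>v inp m (w t)" and wc: "\<forall>t. w t \<in> carrier_vec (m + p)"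
    using w unfolding behavior_def by blast
  show ?thesis unfolding behavior_def
    by (rule CollectI, intro conjI, use wc in simp, rule exI[of _ "\<lambda>t. x (t + k)"]) (use x in simp)
qed

definition imp :: "nat \<Rightarrow> nat \<Rightarrow> nat \<Rightarrow> real mat \<Rightarrow> real mat \<Rightarrow> real mat \<Rightarrow> real mat \<Rightarrow> nat \<Rightarrow> real vec \<Rightarrow> nat \<Rightarrow> real vec" where
  "imp m p n A B C D T u0 = (\<lambda>t. if t < T then 0\<^sub>v (m + p) else if t = T then mkw m p u0 (D *\<^sub>v u0)
      else mkw m p (0\<^sub>v m) (C *\<^sub>v (A ^\<^sub>m (t - T - 1) *\<^sub>v (B *\<^sub>v u0))))"

lemma pow_vec_carrier[simp]: "A \<in> carrier_mat n n \<Longrightarrow> v \<in> carrier_vec n \<Longrightarrow> A ^\<^sub>m k *\<^sub>v v \<in> carrier_vec n"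
  by (rule mult_mat_vec_carrier[OF pow_carrier_mat])

lemma pow_mat_Suc_left:
  assumes A: "A \<in> carrier_mat n n"
  shows "A ^\<^sub>m (Suc k) = A * A ^\<^sub>m k"
  using pow_mat_add[OF A, of 1 k] A by simp

lemma imp_behavior:
  assumes A: "A \<in> carrier_mat n n" and B: "B \<in> carrier_mat n m" and C: "C \<in> carrier_mat p n"
    and D: "D \<in> carrier_mat p m" and u0: "u0 \<in> carrier_vec m"
  shows "imp m p n A B C D T u0 \<in> behavior m p n A B C D"
proof -
  define x where "x = (\<lambda>t. if t \<le> T then 0\<^sub>v n else A ^\<^sub>m (t - T - 1) *\<^sub>v (B *\<^sub>v u0))"
  have xc: "\<forall>t. x t \<in> carrier_vec n" using A B u0 by (auto simp: x_def)
  have "\<forall>t. x (Suc t) = A *\<^sub>v x t + B *\<^sub>v inp m (imp m p n A B C D T u0 t) \<and>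
                 outp m p (imp m p n A B C D T u0 t) = C *\<^sub>v x t + D *\<^sub>v inp m (imp m p n A B C D T u0 t)"
  proof
    fix t
    consider "t < T" | "t = T" | "t > T" by linarith
    thus "x (Suc t) = A *\<^sub>v x t + B *\<^sub>v inp m (imp m p n A B C D T u0 t) \<and>
                 outp m p (imp m p n A B C D T u0 t) = C *\<^sub>v x t + D *\<^sub>v inp m (imp m p n A B C D T u0 t)"
    proof cases
      case 1
      thus ?thesis using A B C D by (auto simp: x_def imp_def outp_def)
    next
      case 2
      thus ?thesis using A B C D u0 by (auto simp: x_def imp_def)
    next
      case 3
      have BU: "B *\<^sub>v u0 \<in> carrier_vec n" using B u0 by simp
      have "A ^\<^sub>m (Suc (t - T - 1)) *\<^sub>v (B *\<^sub>v u0) = A *\<^sub>v (A ^\<^sub>m (t - T - 1) *\<^sub>v (B *\<^sub>v u0))"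
        using A BU by (simp only: pow_mat_Suc_left[OF A]) (rule assoc_mult_mat_vec, auto)
      moreover have "Suc t - T - 1 = Suc (t - T - 1)" using 3 by simp
      ultimately have xs: "x (Suc t) = A *\<^sub>v x t" using 3 by (simp add: x_def)
      have B0: "B *\<^sub>v 0\<^sub>v m = 0\<^sub>v n" using B by (intro eq_vecI) (auto simp: scalar_prod_def)
      have xtc: "x t \<in> carrier_vec n" using xc by simp
      have D0: "D *\<^sub>v 0\<^sub>v m = 0\<^sub>v p" using D by (intro eq_vecI) (auto simp: scalar_prod_def)
      have Cx: "C *\<^sub>v x t \<in> carrier_vec p" using C xtc by simp
      have i0: "inp m (imp m p n A B C D T u0 t) = 0\<^sub>v m" using 3 by (simp add: imp_def)
      have o0: "outp m p (imp m p n A B C D T u0 t) = C *\<^sub>v x t" using 3 A B C BU by (simp add: imp_def x_def)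
      show ?thesis unfolding i0 o0 B0 D0 xs using xtc Cx A by simp
    qed
  qed
  moreover have "\<forall>t. imp m p n A B C D T u0 t \<in> carrier_vec (m + p)" by (simp add: imp_def)
  ultimately show ?thesis unfolding behavior_def using xc by blast
qed



lemma factor_lemma:
  fixes V :: "'a set" and cmb :: "'a \<Rightarrow> real \<Rightarrow> 'a \<Rightarrow> 'a"
    and \<phi> :: "'a \<Rightarrow> nat \<Rightarrow> real" and \<psi> :: "'a \<Rightarrow> real"
  assumes closed: "\<And>v w c. v \<in> V \<Longrightarrow> w \<in> V \<Longrightarrow> cmb v c w \<in> V"
    and philin: "\<And>v w c r. v \<in> V \<Longrightarrow> w \<in> V \<Longrightarrow> \<phi> (cmb v c w) r = \<phi> v r + c * \<phi> w r"
    and psilin: "\<And>v w c. v \<in> V \<Longrightarrow> w \<in> V \<Longrightarrow> \<psi> (cmb v c w) = \<psi> v + c * \<psi> w"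
    and ker: "\<And>v. v \<in> V \<Longrightarrow> (\<forall>r<K. \<phi> v r = 0) \<Longrightarrow> \<psi> v = 0"
  shows "\<exists>g. \<forall>v\<in>V. \<psi> v = (\<Sum>r<K. g r * \<phi> v r)"
  using closed philin psilin ker
proof (induction K arbitrary: V)
  case 0
  thus ?case by auto
next
  case (Suc K)
  define V' where "V' = {v\<in>V. \<phi> v K = 0}"
  have "\<exists>g. \<forall>v\<in>V'. \<psi> v = (\<Sum>r<K. g r * \<phi> v r)"
  proof (rule Suc.IH)
    fix v w c assume "v \<in> V'" "w \<in> V'"
    thus "cmb v c w \<in> V'" using Suc.prems(1,2) by (auto simp: V'_def)
  next
    fix v w c r assume "v \<in> V'" "w \<in> V'"
    thus "\<phi> (cmb v c w) r = \<phi> v r + c * \<phi> w r" using Suc.prems(2) by (auto simp: V'_def)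
  next
    fix v w c assume "v \<in> V'" "w \<in> V'"
    thus "\<psi> (cmb v c w) = \<psi> v + c * \<psi> w" using Suc.prems(3) by (auto simp: V'_def)
  next
    fix v assume v: "v \<in> V'" "\<forall>r<K. \<phi> v r = 0"
    hence "\<forall>r<Suc K. \<phi> v r = 0" by (auto simp: V'_def less_Suc_eq)
    thus "\<psi> v = 0" using v Suc.prems(4) by (auto simp: V'_def)
  qed
  then obtain g' where g': "\<And>v. v \<in> V' \<Longrightarrow> \<psi> v = (\<Sum>r<K. g' r * \<phi> v r)" by blast
  show ?case
  proof (cases "\<forall>v\<in>V. \<phi> v K = 0")
    case True
    hence "V' = V" by (auto simp: V'_def)
    thus ?thesis using g' True by (intro exI[of _ g']) auto
  next
    case False
    then obtain v1 where v1: "v1 \<in> V" "\<phi> v1 K \<noteq> 0" by blast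
    define v0 where "v0 = cmb v1 (1 / \<phi> v1 K - 1) v1"
    have v0: "v0 \<in> V" using v1 Suc.prems(1) by (simp add: v0_def)
    have v0K: "\<phi> v0 K = 1" using v1 Suc.prems(2) by (simp add: v0_def algebra_simps)
    define g where "g = (\<lambda>r. if r < K then g' r else \<psi> v0 - (\<Sum>r<K. g' r * \<phi> v0 r))"
    show ?thesis
    proof (intro exI[of _ g] ballI)
      fix v assume v: "v \<in> V"
      define v' where "v' = cmb v (- \<phi> v K) v0"
      have v'V: "v' \<in> V'" using v v0 v0K Suc.prems(1,2) by (simp add: v'_def V'_def)
      have phiv': "\<phi> v' r = \<phi> v r - \<phi> v K * \<phi> v0 r" for r using v v0 Suc.prems(2) by (simp add: v'_def)
      have "\<psi> v = \<psi> v' + \<phi> v K * \<psi> v0" using v v0 Suc.prems(3) by (simp add: v'_def)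
      also have "\<psi> v' = (\<Sum>r<K. g' r * (\<phi> v r - \<phi> v K * \<phi> v0 r))" using g'[OF v'V] phiv' by simp
      also have "\<dots> = (\<Sum>r<K. g' r * \<phi> v r) - \<phi> v K * (\<Sum>r<K. g' r * \<phi> v0 r)"
        by (simp add: algebra_simps sum_subtractf sum_distrib_left)
      finally have "\<psi> v = (\<Sum>r<K. g' r * \<phi> v r) + \<phi> v K * (\<psi> v0 - (\<Sum>r<K. g' r * \<phi> v0 r))"
        by (simp add: algebra_simps)
      also have "\<dots> = (\<Sum>r<Suc K. g r * \<phi> v r)" by (simp add: g_def mult.commute)
      finally show "\<psi> v = (\<Sum>r<Suc K. g r * \<phi> v r)" .
    qed
  qed
qed


definition qf :: "real mat \<Rightarrow> nat \<Rightarrow> (nat \<Rightarrow> real) \<Rightarrow> real" where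
  "qf \<Psi> K v = (\<Sum>i<K. \<Sum>j<K. v i * \<Psi> $$ (i, j) * v j)"

definition wv :: "nat \<Rightarrow> (nat \<Rightarrow> real vec) \<Rightarrow> nat \<Rightarrow> nat \<Rightarrow> real" where
  "wv q w t = (\<lambda>i. w (t + i div q) $ (i mod q))"

lemma wlen_carrier: "q > 0 \<Longrightarrow> \<Psi> \<in> carrier_mat (N * q) (N * q) \<Longrightarrow> wlen q \<Psi> = N"
  by (simp add: wlen_def)

lemma QDF_qf:
  assumes q: "q > 0" and P: "\<Psi> \<in> carrier_mat (N * q) (N * q)"
  shows "QDF q \<Psi> w t = qf \<Psi> (N * q) (wv q w t)"
proof -
  have wl: "wlen q \<Psi> = N" by (rule wlen_carrier[OF q P])
  define v where "v = window q N w t"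
  have vc: "v \<in> carrier_vec (N * q)" by (simp add: v_def window_def)
  have vi: "\<And>i. i < N * q \<Longrightarrow> v $ i = wv q w t i" by (simp add: v_def window_def wv_def)
  have "QDF q \<Psi> w t = v \<bullet> (\<Psi> *\<^sub>v v)" by (simp add: QDF_def wl v_def Let_def)
  also have "\<dots> = (\<Sum>i<N*q. v $ i * (\<Psi> *\<^sub>v v) $ i)"
    using P by (simp add: scalar_prod_def lessThan_atLeast0)
  also have "\<dots> = (\<Sum>i<N*q. v $ i * (\<Sum>j<N*q. \<Psi> $$ (i,j) * v $ j))"
    by (intro sum.cong refl) (simp add: mult_vec_index_sum[OF P _ vc])
  also have "\<dots> = qf \<Psi> (N * q) (wv q w t)"
    unfolding qf_def by (intro sum.cong refl) (simp add: vi sum_distrib_left mult.assoc)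
  finally show ?thesis .
qed

lemma qf_local:
  assumes z: "\<forall>i<K. \<forall>j<K. (i \<ge> M \<or> j \<ge> M) \<longrightarrow> \<Psi> $$ (i,j) = 0"
    and eq: "\<forall>i<M. v i = v' i"
  shows "qf \<Psi> K v = qf \<Psi> K v'"
  unfolding qf_def
proof (intro sum.cong refl)
  fix i j assume i: "i \<in> {..<K}" and j: "j \<in> {..<K}"
  show "v i * \<Psi> $$ (i, j) * v j = v' i * \<Psi> $$ (i, j) * v' j"
  proof (cases "i < M \<and> j < M")
    case True thus ?thesis using eq by simp
  next
    case False thus ?thesis using z i j by auto
  qed
qed

definition bz :: "nat \<Rightarrow> real mat \<Rightarrow> int \<Rightarrow> bool" where
  "bz q \<Psi> d = (\<forall>i j a b. i < wlen q \<Psi> \<longrightarrow> j < wlen q \<Psi> \<longrightarrow> a < q \<longrightarrow> b < q \<longrightarrow> int i > d \<longrightarrow>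
        \<Psi> $$ (i * q + a, j * q + b) = 0)"

lemma qdf_deg_bz: "qdf_deg q \<Psi> = (LEAST d. d \<ge> -1 \<and> bz q \<Psi> d)"
  unfolding qdf_deg_def bz_def ..

lemma int_least:
  fixes P :: "int \<Rightarrow> bool"
  assumes P0: "P d0" and lb: "\<And>d. P d \<Longrightarrow> d \<ge> -1"
  shows "P (LEAST d. P d) \<and> (\<forall>d. P d \<longrightarrow> (LEAST d. P d) \<le> d)"
proof -
  define k0 where "k0 = (LEAST k::nat. P (int k - 1))"
  have ex: "P (int (nat (d0 + 1)) - 1)" using P0 lb[OF P0] by simp
  have Pk0: "P (int k0 - 1)" unfolding k0_def by (rule LeastI[where P="\<lambda>k. P (int k - 1)", OF ex])
  have le: "int k0 - 1 \<le> y" if "P y" for y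
  proof -
    have "P (int (nat (y + 1)) - 1)" using that lb[OF that] by simp
    hence "k0 \<le> nat (y + 1)" unfolding k0_def by (rule Least_le)
    thus ?thesis using lb[OF that] by simp
  qed
  have "(LEAST d. P d) = int k0 - 1"
    by (rule Least_equality) (use Pk0 le in auto)
  thus ?thesis using Pk0 le by simp
qed

lemma qdf_deg_props:
  assumes q: "q > 0"
  shows "qdf_deg q \<Psi> \<ge> -1" "bz q \<Psi> (qdf_deg q \<Psi>)"
    "\<And>d. d \<ge> -1 \<Longrightarrow> bz q \<Psi> d \<Longrightarrow> qdf_deg q \<Psi> \<le> d"
proof -
  have P0: "int (wlen q \<Psi>) \<ge> -1 \<and> bz q \<Psi> (int (wlen q \<Psi>))" by (auto simp: bz_def)
  note L = int_least[of "\<lambda>d. d \<ge> -1 \<and> bz q \<Psi> d", OF P0]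
  show "qdf_deg q \<Psi> \<ge> -1" "bz q \<Psi> (qdf_deg q \<Psi>)" using L unfolding qdf_deg_bz by auto
  show "\<And>d. d \<ge> -1 \<Longrightarrow> bz q \<Psi> d \<Longrightarrow> qdf_deg q \<Psi> \<le> d" using L unfolding qdf_deg_bz by auto
qed

lemma bz_mono: "bz q \<Psi> d \<Longrightarrow> d \<le> d' \<Longrightarrow> bz q \<Psi> d'"
  unfolding bz_def by force

lemma bz_zero_entries:
  assumes q: "q > 0" and P: "\<Psi> \<in> carrier_mat (N * q) (N * q)" and sym: "transpose_mat \<Psi> = \<Psi>"
    and bz: "bz q \<Psi> L" and L: "L \<ge> -1"
  shows "\<forall>i<N*q. \<forall>j<N*q. (i \<ge> nat (L+1) * q \<or> j \<ge> nat (L+1) * q) \<longrightarrow> \<Psi> $$ (i,j) = 0"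
proof -
  have wl: "wlen q \<Psi> = N" by (rule wlen_carrier[OF q P])
  have one: "\<Psi> $$ (i,j) = 0" if i: "i < N*q" "i \<ge> nat (L+1) * q" and j: "j < N*q" for i j
  proof -
    have "nat (L+1) * q div q \<le> i div q" using i(2) by (rule div_le_mono)
    hence "i div q \<ge> nat (L+1)" using q by simp
    hence gt: "int (i div q) > L" using L by linarith
    have "i div q < N" "j div q < N" using i j q by (auto simp: div_less_iff_less_mult)
    moreover have "i = (i div q) * q + i mod q" "j = (j div q) * q + j mod q" by simp_all
    moreover have "i mod q < q" "j mod q < q" using q by auto
    ultimately show ?thesis using bz gt wl unfolding bz_def by metis
  qed
  show ?thesis
  proof (intro allI impI)
    fix i j assume ij: "i < N*q" "j < N*q" "i \<ge> nat (L+1) * q \<or> j \<ge> nat (L+1) * q"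
    show "\<Psi> $$ (i,j) = 0"
    proof (cases "i \<ge> nat (L+1) * q")
      case True thus ?thesis using one ij by blast
    next
      case False
      hence "j \<ge> nat (L+1) * q" using ij by blast
      hence "\<Psi> $$ (j,i) = 0" using one ij by blast
      moreover have "\<Psi> $$ (i,j) = transpose_mat \<Psi> $$ (i,j)" using sym by simp
      moreover have "transpose_mat \<Psi> $$ (i,j) = \<Psi> $$ (j,i)" using ij P by simp
      ultimately show ?thesis by simp
    qed
  qed
qed

lemma qf_local_deg:
  assumes q: "q > 0" and P: "\<Psi> \<in> carrier_mat (N * q) (N * q)" and sym: "transpose_mat \<Psi> = \<Psi>"
    and bz: "bz q \<Psi> L" and L: "L \<ge> -1" and eq: "\<forall>i < nat (L+1) * q. v i = v' i"
  shows "qf \<Psi> (N * q) v = qf \<Psi> (N * q) v'"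
  by (rule qf_local[OF bz_zero_entries[OF q P sym bz L] eq])

lemma sum_split_shift: "(\<Sum>i<q + (M::nat). f i) = (\<Sum>i<q. f i) + (\<Sum>i<M. f (i + q)::'a::comm_monoid_add)"
  by (induction M) (simp_all add: add_ac)

lemma wv_shift: "q > 0 \<Longrightarrow> wv q w t (i + q) = wv q w (Suc t) i"
  by (simp add: wv_def)

lemma nabla_carrier:
  assumes P: "\<Psi> \<in> carrier_mat (N * q) (N * q)"
  shows "nabla q \<Psi> \<in> carrier_mat (Suc N * q) (Suc N * q)"
  using P by (auto simp: nabla_def)

lemma QDF_nabla:
  assumes q: "q > 0" and P: "\<Psi> \<in> carrier_mat (N * q) (N * q)"
  shows "QDF q (nabla q \<Psi>) w t = QDF q \<Psi> w (Suc t) - QDF q \<Psi> w t"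
proof -
  define K where "K = Suc N * q"
  have NC: "nabla q \<Psi> \<in> carrier_mat K K" using nabla_carrier[OF P] by (simp add: K_def)
  define v where "v = wv q w t"
  have ent: "nabla q \<Psi> $$ (i,j) = (if i < q \<or> j < q then 0 else \<Psi> $$ (i - q, j - q))
                 - (if i < N*q \<and> j < N*q then \<Psi> $$ (i,j) else 0)" if "i < K" "j < K" for i j
    using that P by (auto simp: nabla_def K_def)
  have "QDF q (nabla q \<Psi>) w t = qf (nabla q \<Psi>) K v"
    unfolding K_def v_def by (rule QDF_qf[OF q nabla_carrier[OF P]])
  also have "\<dots> = (\<Sum>i<K. \<Sum>j<K. v i * (if i < q \<or> j < q then 0 else \<Psi> $$ (i - q, j - q)) * v j)
       - (\<Sum>i<K. \<Sum>j<K. v i * (if i < N*q \<and> j < N*q then \<Psi> $$ (i,j) else 0) * v j)"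
    unfolding qf_def by (simp add: ent sum_subtractf algebra_simps)
  also have "(\<Sum>i<K. \<Sum>j<K. v i * (if i < N*q \<and> j < N*q then \<Psi> $$ (i,j) else 0) * v j)
      = qf \<Psi> (N*q) v"
  proof -
    have "(\<Sum>i<K. \<Sum>j<K. v i * (if i < N*q \<and> j < N*q then \<Psi> $$ (i,j) else 0) * v j)
        = (\<Sum>i<N*q. \<Sum>j<K. v i * (if i < N*q \<and> j < N*q then \<Psi> $$ (i,j) else 0) * v j)"
      by (rule sum.mono_neutral_right) (auto simp: K_def)
    also have "\<dots> = (\<Sum>i<N*q. \<Sum>j<N*q. v i * (if i < N*q \<and> j < N*q then \<Psi> $$ (i,j) else 0) * v j)"
      by (intro sum.cong refl sum.mono_neutral_right) (auto simp: K_def)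
    also have "\<dots> = qf \<Psi> (N*q) v" unfolding qf_def by (intro sum.cong refl) auto
    finally show ?thesis .
  qed
  also have "(\<Sum>i<K. \<Sum>j<K. v i * (if i < q \<or> j < q then 0 else \<Psi> $$ (i - q, j - q)) * v j)
      = qf \<Psi> (N*q) (wv q w (Suc t))"
  proof -
    have K: "K = q + N * q" by (simp add: K_def)
    have "(\<Sum>i<K. \<Sum>j<K. v i * (if i < q \<or> j < q then 0 else \<Psi> $$ (i - q, j - q)) * v j)
       = (\<Sum>i<N*q. \<Sum>j<K. v (i+q) * (if i + q < q \<or> j < q then 0 else \<Psi> $$ (i + q - q, j - q)) * v j)"
      unfolding K sum_split_shift by simp
    also have "\<dots> = (\<Sum>i<N*q. \<Sum>j<N*q. v (i+q) * \<Psi> $$ (i, j) * v (j+q))"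
      unfolding K sum_split_shift by simp
    also have "\<dots> = qf \<Psi> (N*q) (wv q w (Suc t))"
      unfolding qf_def v_def using wv_shift[OF q] by simp
    finally show ?thesis .
  qed
  also have "qf \<Psi> (N*q) v = QDF q \<Psi> w t" unfolding v_def by (rule QDF_qf[OF q P, symmetric])
  also have "qf \<Psi> (N*q) (wv q w (Suc t)) = QDF q \<Psi> w (Suc t)" by (rule QDF_qf[OF q P, symmetric])
  finally show ?thesis .
qed



lemma behavior_carrier: "w \<in> behavior m p n A B C D \<Longrightarrow> w t \<in> carrier_vec (m + p)"
  unfolding behavior_def by blast

lemma behavior_state:
  assumes "w \<in> behavior m p n A B C D"
  obtains x where "\<forall>t. x t \<in> carrier_vec n" "\<forall>t. x (Suc t) = A *\<^sub>v x t + B *\<^sub>v inp m (w t)"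
    "\<forall>t. outp m p (w t) = C *\<^sub>v x t + D *\<^sub>v inp m (w t)"
  using assms unfolding behavior_def by blast

lemma ker_lemma:
  fixes A B C D :: "real mat"
  assumes A: "A \<in> carrier_mat n n" and B: "B \<in> carrier_mat n m" and C: "C \<in> carrier_mat p n"
    and D: "D \<in> carrier_mat p m" and p: "p > 0"
    and l: "l = (LEAST k. obs_rank p n k C A = obs_rank p n (Suc k) C A)" and L: "l \<le> L"
    and w: "w \<in> behavior m p n A B C D"
    and z: "\<forall>r < L * (m + p). wv (m + p) w 0 r = 0"
  shows "outp m p (w L) = D *\<^sub>v inp m (w L)"
proof -
  define q where "q = m + p"
  have q: "q > 0" using p by (simp add: q_def)
  have w0: "w j = 0\<^sub>v q" if j: "j < L" for j
  proof (rule eq_vecI)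
    fix a assume a: "a < dim_vec (0\<^sub>v q)"
    hence a': "a < q" by simp
    have "j * q + a < L * q"
    proof -
      have "j * q + a < j * q + q" using a' by simp
      also have "\<dots> = Suc j * q" by simp
      also have "\<dots> \<le> L * q" using j by (intro mult_right_mono) auto
      finally show ?thesis .
    qed
    hence "wv q w 0 (j * q + a) = 0" using z by (simp add: q_def)
    moreover have "(j * q + a) div q = j" "(j * q + a) mod q = a" using a' by auto
    ultimately show "w j $ a = 0\<^sub>v q $ a" using a' by (simp add: wv_def)
  next
    show "dim_vec (w j) = dim_vec (0\<^sub>v q)" using behavior_carrier[OF w] by (simp add: q_def)
  qed
  obtain x where xc: "\<forall>t. x t \<in> carrier_vec n" and xs: "\<forall>t. x (Suc t) = A *\<^sub>v x t + B *\<^sub>v inp m (w t)"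
    and ys: "\<forall>t. outp m p (w t) = C *\<^sub>v x t + D *\<^sub>v inp m (w t)"
    using behavior_state[OF w] by blast
  have inp0: "inp m (w j) = 0\<^sub>v m" if "j < L" for j using w0[OF that] by (auto simp: inp_def q_def)
  have outp0: "outp m p (w j) = 0\<^sub>v p" if "j < L" for j using w0[OF that] by (auto simp: outp_def q_def)
  have B0: "B *\<^sub>v 0\<^sub>v m = 0\<^sub>v n" using B by (intro eq_vecI) (auto simp: scalar_prod_def)
  have D0: "D *\<^sub>v 0\<^sub>v m = 0\<^sub>v p" using D by (intro eq_vecI) (auto simp: scalar_prod_def)
  have xpow: "x j = A ^\<^sub>m j *\<^sub>v x 0" if "j \<le> L" for j
    using that
  proof (induction j)
    case 0 have "x 0 \<in> carrier_vec n" using xc by simp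
    thus ?case using A by simp
  next
    case (Suc j)
    have "x (Suc j) = A *\<^sub>v x j" using xs inp0[of j] Suc.prems B0 xc A
      by (simp add: )
    also have "\<dots> = A *\<^sub>v (A ^\<^sub>m j *\<^sub>v x 0)" using Suc by simp
    also have "\<dots> = (A * A ^\<^sub>m j) *\<^sub>v x 0" using A xc by (intro assoc_mult_mat_vec[symmetric]) auto
    also have "\<dots> = A ^\<^sub>m (Suc j) *\<^sub>v x 0" by (simp only: pow_mat_Suc_left[OF A])
    finally show ?case .
  qed
  have CA0: "\<forall>j<L. (C * A ^\<^sub>m j) *\<^sub>v x 0 = 0\<^sub>v p"
  proof (intro allI impI)
    fix j assume j: "j < L"
    have "(C * A ^\<^sub>m j) *\<^sub>v x 0 = C *\<^sub>v (A ^\<^sub>m j *\<^sub>v x 0)" using C A xc by (intro assoc_mult_mat_vec) auto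
    also have "\<dots> = C *\<^sub>v x j" using xpow[of j] j by simp
    also have "\<dots> = 0\<^sub>v p"
    proof -
      have "outp m p (w j) = C *\<^sub>v x j + D *\<^sub>v 0\<^sub>v m" using ys inp0[OF j] by simp
      hence "0\<^sub>v p = C *\<^sub>v x j + 0\<^sub>v p" using outp0[OF j] D0 by simp
      thus ?thesis using C xc by simp
    qed
    finally show "(C * A ^\<^sub>m j) *\<^sub>v x 0 = 0\<^sub>v p" .
  qed
  have "(C * A ^\<^sub>m L) *\<^sub>v x 0 = 0\<^sub>v p" by (rule obs_ker_stab[OF p C A l L _ CA0]) (use xc in simp)
  moreover have "(C * A ^\<^sub>m L) *\<^sub>v x 0 = C *\<^sub>v x L"
  proof -
    have "(C * A ^\<^sub>m L) *\<^sub>v x 0 = C *\<^sub>v (A ^\<^sub>m L *\<^sub>v x 0)" using C A xc by (intro assoc_mult_mat_vec) auto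
    thus ?thesis using xpow[of L] by simp
  qed
  ultimately have "C *\<^sub>v x L = 0\<^sub>v p" by simp
  thus ?thesis using ys D by simp
qed


lemma dim_outp[simp]: "dim_vec (outp m p v) = p" by (simp add: outp_def)
lemma dim_inp[simp]: "dim_vec (inp m v) = m" by (simp add: inp_def)

lemma wv_comb:
  assumes w: "w \<in> behavior m p n A B C D" and w': "w' \<in> behavior m p n A B C D" and q: "m + p > 0"
  shows "wv (m + p) (comb w c w') t r = wv (m + p) w t r + c * wv (m + p) w' t r"
proof -
  define k where "k = r mod (m + p)"
  define s where "s = t + r div (m + p)"
  have k: "k < m + p" using q by (simp add: k_def)
  have d: "dim_vec (w' s) = m + p" using behavior_carrier[OF w', of s] by (rule carrier_vecD)
  have "wv (m + p) (comb w c w') t r = (w s + c \<cdot>\<^sub>v w' s) $ k" by (simp add: wv_def comb_def k_def s_def)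
  also have "\<dots> = w s $ k + c * w' s $ k" using k d by simp
  finally show ?thesis by (simp add: wv_def k_def s_def)
qed

lemma F_exists:
  fixes A B C D :: "real mat"
  assumes A: "A \<in> carrier_mat n n" and B: "B \<in> carrier_mat n m" and C: "C \<in> carrier_mat p n"
    and D: "D \<in> carrier_mat p m" and p: "p > 0"
    and l: "l = (LEAST k. obs_rank p n k C A = obs_rank p n (Suc k) C A)" and L: "l \<le> L"
  shows "\<exists>G. \<forall>i<p. \<forall>w\<in>behavior m p n A B C D. \<forall>t.
     outp m p (w (t + L)) $ i - (D *\<^sub>v inp m (w (t + L))) $ i = (\<Sum>r<L * (m + p). G i r * wv (m + p) w t r)"
proof -
  define Bh where "Bh = behavior m p n A B C D"
  have q: "m + p > 0" using p by simp
  have one: "\<exists>g. \<forall>w\<in>Bh. outp m p (w L) $ i - (D *\<^sub>v inp m (w L)) $ i = (\<Sum>r<L * (m + p). g r * wv (m + p) w 0 r)"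
    if i: "i < p" for i
  proof (rule factor_lemma[where V=Bh and cmb=comb and \<phi>="\<lambda>w r. wv (m + p) w 0 r"
      and \<psi>="\<lambda>w. outp m p (w L) $ i - (D *\<^sub>v inp m (w L)) $ i" and K="L * (m + p)"])
    fix v w c assume "v \<in> Bh" "w \<in> Bh"
    thus "comb v c w \<in> Bh" unfolding Bh_def by (rule behavior_comb[OF A B C D])
  next
    fix v w c r assume "v \<in> Bh" "w \<in> Bh"
    thus "wv (m + p) (comb v c w) 0 r = wv (m + p) v 0 r + c * wv (m + p) w 0 r"
      unfolding Bh_def by (rule wv_comb[OF _ _ q])
  next
    fix v w c assume v: "v \<in> Bh" and w: "w \<in> Bh"
    have vc: "v L \<in> carrier_vec (m + p)" and wc: "w L \<in> carrier_vec (m + p)"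
      using v w behavior_carrier unfolding Bh_def by blast+
    have o: "outp m p (comb v c w L) = outp m p (v L) + c \<cdot>\<^sub>v outp m p (w L)"
      unfolding comb_def by (rule outp_comb[OF vc wc])
    have ii: "inp m (comb v c w L) = inp m (v L) + c \<cdot>\<^sub>v inp m (w L)"
      unfolding comb_def by (rule inp_comb[OF vc wc])
    have d: "D *\<^sub>v inp m (comb v c w L) = D *\<^sub>v inp m (v L) + c \<cdot>\<^sub>v (D *\<^sub>v inp m (w L))"
      unfolding ii using mult_add_distrib_mat_vec[OF D inp_carrier, of "c \<cdot>\<^sub>v inp m (w L)"] mult_mat_vec[OF D inp_carrier] by simp
    show "outp m p (comb v c w L) $ i - (D *\<^sub>v inp m (comb v c w L)) $ i =
          outp m p (v L) $ i - (D *\<^sub>v inp m (v L)) $ i + c * (outp m p (w L) $ i - (D *\<^sub>v inp m (w L)) $ i)"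
      unfolding o d using i D by (simp add: algebra_simps)
  next
    fix v assume v: "v \<in> Bh" and z: "\<forall>r<L * (m + p). wv (m + p) v 0 r = 0"
    have "outp m p (v L) = D *\<^sub>v inp m (v L)"
      by (rule ker_lemma[OF A B C D p l L _ z]) (use v in \<open>simp add: Bh_def\<close>)
    thus "outp m p (v L) $ i - (D *\<^sub>v inp m (v L)) $ i = 0" by simp
  qed
  hence "\<forall>i. \<exists>g. i < p \<longrightarrow> (\<forall>w\<in>Bh. outp m p (w L) $ i - (D *\<^sub>v inp m (w L)) $ i = (\<Sum>r<L * (m + p). g r * wv (m + p) w 0 r))"
    by blast
  from choice[OF this] obtain G where G0: "\<forall>i. i < p \<longrightarrow> (\<forall>w\<in>Bh. outp m p (w L) $ i - (D *\<^sub>v inp m (w L)) $ i = (\<Sum>r<L * (m + p). G i r * wv (m + p) w 0 r))"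
    by blast
  have G: "\<And>i. i < p \<Longrightarrow> (\<forall>w\<in>Bh. outp m p (w L) $ i - (D *\<^sub>v inp m (w L)) $ i = (\<Sum>r<L * (m + p). G i r * wv (m + p) w 0 r))"
    using G0 by blast
  show ?thesis
  proof (intro exI[of _ G] allI impI ballI)
    fix i w t assume i: "i < p" and w: "w \<in> behavior m p n A B C D"
    have ws: "(\<lambda>s. w (s + t)) \<in> Bh" unfolding Bh_def by (rule behavior_shift[OF w])
    have e: "wv (m + p) (\<lambda>s. w (s + t)) 0 = wv (m + p) w t" by (auto simp: wv_def add.commute)
    have "outp m p (w (L + t)) $ i - (D *\<^sub>v inp m (w (L + t))) $ i = (\<Sum>r<L * (m + p). G i r * wv (m + p) (\<lambda>s. w (s + t)) 0 r)"
      using bspec[OF G[OF i] ws] by simp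
    thus "outp m p (w (t + L)) $ i - (D *\<^sub>v inp m (w (t + L))) $ i = (\<Sum>r<L * (m + p). G i r * wv (m + p) w t r)"
      unfolding e by (simp only: add.commute[of t L])
  qed
qed



lemma sum4_swap:
  "(\<Sum>r<K. \<Sum>s<K. \<Sum>r1<K. \<Sum>s1<K. F r s r1 s1) = (\<Sum>r1<K. \<Sum>s1<K. \<Sum>r<K. \<Sum>s<K. F r s r1 s1)"
proof -
  have "(\<Sum>r<K. \<Sum>s<K. \<Sum>r1<K. \<Sum>s1<K. F r s r1 s1) = (\<Sum>r<K. \<Sum>r1<K. \<Sum>s<K. \<Sum>s1<K. F r s r1 s1)"
    by (rule sum.cong[OF refl], rule sum.swap)
  also have "\<dots> = (\<Sum>r1<K. \<Sum>r<K. \<Sum>s<K. \<Sum>s1<K. F r s r1 s1)" by (rule sum.swap)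
  also have "\<dots> = (\<Sum>r1<K. \<Sum>r<K. \<Sum>s1<K. \<Sum>s<K. F r s r1 s1)"
    by (rule sum.cong[OF refl], rule sum.cong[OF refl], rule sum.swap)
  also have "\<dots> = (\<Sum>r1<K. \<Sum>s1<K. \<Sum>r<K. \<Sum>s<K. F r s r1 s1)"
    by (rule sum.cong[OF refl], rule sum.swap)
  finally show ?thesis .
qed

definition tmat :: "real mat \<Rightarrow> nat \<Rightarrow> (nat \<Rightarrow> nat \<Rightarrow> real) \<Rightarrow> real mat" where
  "tmat \<Psi> K S = mat K K (\<lambda>(r, s). \<Sum>r1<K. \<Sum>s1<K. S r1 r * \<Psi> $$ (r1, s1) * S s1 s)"

definition Sv :: "nat \<Rightarrow> (nat \<Rightarrow> nat \<Rightarrow> real) \<Rightarrow> (nat \<Rightarrow> real) \<Rightarrow> nat \<Rightarrow> real" where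
  "Sv K S v = (\<lambda>r1. \<Sum>r<K. S r1 r * v r)"

lemma tmat_carrier: "tmat \<Psi> K S \<in> carrier_mat K K" by (simp add: tmat_def)

lemma sum2_mult: "a * (\<Sum>i\<in>I. \<Sum>j\<in>J. X i j) * (b::real) = (\<Sum>i\<in>I. \<Sum>j\<in>J. a * X i j * b)"
  by (simp add: sum_distrib_left sum_distrib_right)

lemma prod_sums: "(\<Sum>i\<in>I. f i) * (c::real) * (\<Sum>j\<in>J. g j) = (\<Sum>i\<in>I. \<Sum>j\<in>J. f i * c * g j)"
  by (simp add: sum_distrib_right sum_distrib_left) (rule sum.swap)

lemma qf_tmat: "qf (tmat \<Psi> K S) K v = qf \<Psi> K (Sv K S v)"
proof -
  have "qf (tmat \<Psi> K S) K v = (\<Sum>r<K. \<Sum>s<K. \<Sum>r1<K. \<Sum>s1<K. (S r1 r * v r) * \<Psi> $$ (r1, s1) * (S s1 s * v s))"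
    unfolding qf_def tmat_def
  proof (intro sum.cong refl)
    fix r s assume "r \<in> {..<K}" "s \<in> {..<K}"
    hence "mat K K (\<lambda>(r, s). \<Sum>r1<K. \<Sum>s1<K. S r1 r * \<Psi> $$ (r1, s1) * S s1 s) $$ (r, s)
       = (\<Sum>r1<K. \<Sum>s1<K. S r1 r * \<Psi> $$ (r1, s1) * S s1 s)" by simp
    thus "v r * mat K K (\<lambda>(r, s). \<Sum>r1<K. \<Sum>s1<K. S r1 r * \<Psi> $$ (r1, s1) * S s1 s) $$ (r, s) * v s =
         (\<Sum>r1<K. \<Sum>s1<K. S r1 r * v r * \<Psi> $$ (r1, s1) * (S s1 s * v s))"
      by (simp only: sum2_mult) (simp add: mult_ac)
  qed
  also have "\<dots> = (\<Sum>r1<K. \<Sum>s1<K. \<Sum>r<K. \<Sum>s<K. (S r1 r * v r) * \<Psi> $$ (r1, s1) * (S s1 s * v s))"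
    by (rule sum4_swap)
  also have "\<dots> = qf \<Psi> K (Sv K S v)"
    unfolding qf_def Sv_def
    by (intro sum.cong refl) (simp only: prod_sums)
  finally show ?thesis .
qed

lemma tmat_sym:
  assumes sym: "\<And>i j. i < K \<Longrightarrow> j < K \<Longrightarrow> \<Psi> $$ (i, j) = \<Psi> $$ (j, i)"
  shows "transpose_mat (tmat \<Psi> K S) = tmat \<Psi> K S"
proof (rule eq_matI)
  fix r s assume r: "r < dim_row (tmat \<Psi> K S)" and s: "s < dim_col (tmat \<Psi> K S)"
  hence rs: "r < K" "s < K" by (auto simp: tmat_def)
  have "transpose_mat (tmat \<Psi> K S) $$ (r, s) = (\<Sum>r1<K. \<Sum>s1<K. S r1 s * \<Psi> $$ (r1, s1) * S s1 r)"
    using rs by (simp add: tmat_def)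
  also have "\<dots> = (\<Sum>s1<K. \<Sum>r1<K. S r1 s * \<Psi> $$ (r1, s1) * S s1 r)" by (rule sum.swap)
  also have "\<dots> = (\<Sum>s1<K. \<Sum>r1<K. S s1 r * \<Psi> $$ (s1, r1) * S r1 s)"
    using sym by (intro sum.cong refl) (simp add: mult_ac)
  also have "\<dots> = tmat \<Psi> K S $$ (r, s)" using rs by (simp add: tmat_def)
  finally show "transpose_mat (tmat \<Psi> K S) $$ (r, s) = tmat \<Psi> K S $$ (r, s)" .
qed (auto simp: tmat_def)

lemma qf_add:
  assumes sym: "\<And>i j. i < K \<Longrightarrow> j < K \<Longrightarrow> \<Psi> $$ (i, j) = \<Psi> $$ (j, i)"
  shows "qf \<Psi> K (\<lambda>r. v r + c * b r) = qf \<Psi> K v + 2 * c * (\<Sum>i<K. \<Sum>j<K. v i * \<Psi> $$ (i, j) * b j) + c^2 * qf \<Psi> K b"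
proof -
  have X: "(\<Sum>i<K. \<Sum>j<K. b i * \<Psi> $$ (i, j) * v j) = (\<Sum>i<K. \<Sum>j<K. v i * \<Psi> $$ (i, j) * b j)"
  proof -
    have "(\<Sum>i<K. \<Sum>j<K. b i * \<Psi> $$ (i, j) * v j) = (\<Sum>j<K. \<Sum>i<K. b i * \<Psi> $$ (i, j) * v j)"
      by (rule sum.swap)
    also have "\<dots> = (\<Sum>j<K. \<Sum>i<K. v j * \<Psi> $$ (j, i) * b i)"
      using sym by (intro sum.cong refl) (simp add: mult_ac)
    finally show ?thesis .
  qed
  have "qf \<Psi> K (\<lambda>r. v r + c * b r) = (\<Sum>i<K. \<Sum>j<K. v i * \<Psi> $$ (i, j) * v j + c * (v i * \<Psi> $$ (i, j) * b j)
       + c * (b i * \<Psi> $$ (i, j) * v j) + c^2 * (b i * \<Psi> $$ (i, j) * b j))"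
    unfolding qf_def by (intro sum.cong refl) (simp add: algebra_simps power2_eq_square)
  also have "\<dots> = qf \<Psi> K v + c * (\<Sum>i<K. \<Sum>j<K. v i * \<Psi> $$ (i, j) * b j)
      + c * (\<Sum>i<K. \<Sum>j<K. b i * \<Psi> $$ (i, j) * v j) + c^2 * qf \<Psi> K b"
    unfolding qf_def by (simp add: sum.distrib sum_distrib_left)
  finally show ?thesis unfolding X by simp
qed



lemma qf_zero: "qf \<Psi> K (\<lambda>_. 0) = 0" by (simp add: qf_def)

lemma sym_entries:
  assumes P: "\<Psi> \<in> carrier_mat K K" and S: "transpose_mat \<Psi> = \<Psi>"
  shows "\<And>i j. i < K \<Longrightarrow> j < K \<Longrightarrow> \<Psi> $$ (i, j) = \<Psi> $$ (j, i)"
proof -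
  fix i j assume "i < K" "j < K"
  hence "transpose_mat \<Psi> $$ (i, j) = \<Psi> $$ (j, i)" using P by simp
  thus "\<Psi> $$ (i, j) = \<Psi> $$ (j, i)" using S by simp
qed

lemma nat_intL: "nat (int L + 1) = Suc L" by simp

lemma div_le_of_less: "r < Suc L * q \<Longrightarrow> r div q \<le> L"
  by (metis less_Suc_eq_le less_mult_imp_div_less)

lemma idx_lt: "i < N \<Longrightarrow> a < q \<Longrightarrow> i * q + a < N * (q::nat)"
proof -
  assume "i < N" "a < q"
  hence "i * q + a < i * q + q" by simp
  also have "\<dots> = Suc i * q" by simp
  also have "\<dots> \<le> N * q" using \<open>i < N\<close> by (intro mult_right_mono) auto
  finally show ?thesis .
qed

definition Smap :: "nat \<Rightarrow> nat \<Rightarrow> nat \<Rightarrow> (nat \<Rightarrow> nat \<Rightarrow> real) \<Rightarrow> nat \<Rightarrow> nat \<Rightarrow> real" where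
  "Smap m p L G r1 r = (if r1 < L * (m + p) then (if r1 = r then 1 else 0)
     else if r1 div (m + p) = L \<and> m \<le> r1 mod (m + p) \<and> r < L * (m + p) then G (r1 mod (m + p) - m) r else 0)"

context
  fixes m p n :: nat and A B C D :: "real mat"
  assumes A: "A \<in> carrier_mat n n" and B: "B \<in> carrier_mat n m" and C: "C \<in> carrier_mat p n"
    and D: "D \<in> carrier_mat p m" and m: "m > 0" and p: "p > 0"
begin

lemma q: "m + p > 0" using p by simp

lemma imp_in: "u0 \<in> carrier_vec m \<Longrightarrow> imp m p n A B C D T u0 \<in> behavior m p n A B C D"
  by (rule imp_behavior[OF A B C D])

lemma QDF_imp_early:
  assumes P: "\<Psi> \<in> carrier_mat (N * (m + p)) (N * (m + p))" and S: "transpose_mat \<Psi> = \<Psi>"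
    and bzL: "bz (m + p) \<Psi> (int L)" and T: "t + L < T"
  shows "QDF (m + p) \<Psi> (imp m p n A B C D T u0) t = 0"
proof -
  have "QDF (m + p) \<Psi> (imp m p n A B C D T u0) t = qf \<Psi> (N * (m + p)) (wv (m + p) (imp m p n A B C D T u0) t)"
    by (rule QDF_qf[OF q P])
  also have "\<dots> = qf \<Psi> (N * (m + p)) (\<lambda>_. 0)"
  proof (rule qf_local_deg[OF q P S bzL])
    show "int L \<ge> -1" by simp
    show "\<forall>i<nat (int L + 1) * (m + p). wv (m + p) (imp m p n A B C D T u0) t i = 0"
    proof (intro allI impI)
      fix i assume "i < nat (int L + 1) * (m + p)"
      hence "i < Suc L * (m + p)" by (simp only: nat_intL)
      hence "i div (m + p) \<le> L" by (rule div_le_of_less)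
      hence "t + i div (m + p) < T" using T by simp
      moreover have "i mod (m + p) < m + p" using q by simp
      ultimately show "wv (m + p) (imp m p n A B C D T u0) t i = 0" by (simp add: wv_def imp_def)
    qed
  qed
  also have "\<dots> = 0" by (rule qf_zero)
  finally show ?thesis .
qed

lemma key_eq:
  assumes l: "l = (LEAST k. obs_rank p n k C A = obs_rank p n (Suc k) C A)" and L: "l \<le> L"
    and P\<Phi>: "\<Phi> \<in> carrier_mat (N\<Phi> * (m + p)) (N\<Phi> * (m + p))" and S\<Phi>: "transpose_mat \<Phi> = \<Phi>"
    and b\<Phi>: "bz (m + p) \<Phi> (int L)"
    and P: "\<Psi> \<in> carrier_mat (N * (m + p)) (N * (m + p))" and S: "transpose_mat \<Psi> = \<Psi>"
    and b\<Psi>: "bz (m + p) \<Psi> (int L)"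
    and sf: "storage_function m p (behavior m p n A B C D) \<Phi> \<Psi>"
    and LN: "L < N"
    and G: "\<forall>i<p. \<forall>w\<in>behavior m p n A B C D. \<forall>t.
     outp m p (w (t + L)) $ i - (D *\<^sub>v inp m (w (t + L))) $ i = (\<Sum>r<L * (m + p). G i r * wv (m + p) w t r)"
    and w: "w \<in> behavior m p n A B C D"
  shows "qf \<Psi> (N * (m + p)) (Sv (N * (m + p)) (Smap m p L G) (wv (m + p) w t)) = qf \<Psi> (N * (m + p)) (wv (m + p) w t)"
proof -
  define q where "q = m + p"
  define K where "K = N * q"
  define Bh where "Bh = behavior m p n A B C D"
  have q0: "q > 0" using q by (simp add: q_def)
  have wB: "w \<in> Bh" using w by (simp add: Bh_def)
  have nonneg: "\<And>w t. w \<in> Bh \<Longrightarrow> QDF q \<Psi> w t \<ge> 0" using sf by (simp add: storage_function_def Bh_def q_def)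
  have diss: "\<And>w t. w \<in> Bh \<Longrightarrow> QDF q (nabla q \<Psi>) w t \<le> QDF q \<Phi> w t"
    using sf by (simp add: storage_function_def Bh_def q_def)
  have symE: "\<And>i j. i < K \<Longrightarrow> j < K \<Longrightarrow> \<Psi> $$ (i, j) = \<Psi> $$ (j, i)"
    using sym_entries[OF P S] unfolding K_def q_def by blast
  have PK: "\<Psi> \<in> carrier_mat (N * q) (N * q)" using P by (simp add: q_def)
  define v where "v = wv q w t"
  define u0 where "u0 = inp m (w (t + L))"
  have u0c: "u0 \<in> carrier_vec m" by (simp add: u0_def)
  define \<iota> where "\<iota> = imp m p n A B C D (t + L) u0"
  have \<iota>B: "\<iota> \<in> Bh" unfolding \<iota>_def Bh_def by (rule imp_in[OF u0c])
  define b where "b = wv q \<iota> t"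
  have qa: "0 \<le> qf \<Psi> K (\<lambda>r. v r + c * b r)" for c
  proof -
    have cB: "comb w c \<iota> \<in> Bh" unfolding Bh_def by (rule behavior_comb[OF A B C D w \<iota>B[unfolded Bh_def]])
    have "wv q (comb w c \<iota>) t = (\<lambda>r. v r + c * b r)"
      unfolding v_def b_def q_def by (rule ext, rule wv_comb[OF w \<iota>B[unfolded Bh_def] q])
    hence "QDF q \<Psi> (comb w c \<iota>) t = qf \<Psi> K (\<lambda>r. v r + c * b r)"
      using QDF_qf[OF q0 PK] by (simp add: K_def)
    thus ?thesis using nonneg[OF cB, of t] by linarith
  qed
  have qb0: "qf \<Psi> K b \<ge> 0"
  proof -
    have "QDF q \<Psi> \<iota> t = qf \<Psi> K b" using QDF_qf[OF q0 PK] by (simp add: K_def b_def)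
    thus ?thesis using nonneg[OF \<iota>B, of t] by linarith
  qed
  define \<kappa> where "\<kappa> = imp m p n A B C D (Suc L) u0"
  have \<kappa>B: "\<kappa> \<in> Bh" unfolding \<kappa>_def Bh_def by (rule imp_in[OF u0c])
  have eq\<kappa>: "qf \<Psi> K b = qf \<Psi> K (wv q \<kappa> 1)"
    unfolding K_def
  proof (rule qf_local_deg[OF q0 PK S[unfolded q_def, folded q_def] b\<Psi>[folded q_def]])
    show "int L \<ge> -1" by simp
    show "\<forall>i<nat (int L + 1) * q. b i = wv q \<kappa> 1 i"
    proof (intro allI impI)
      fix i assume "i < nat (int L + 1) * q"
      hence "i < Suc L * q" by (simp only: nat_intL)
      hence d: "i div q \<le> L" by (rule div_le_of_less)
      show "b i = wv q \<kappa> 1 i"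
      proof (cases "i div q < L")
        case True thus ?thesis by (simp add: b_def wv_def \<iota>_def \<kappa>_def imp_def)
      next
        case False hence "i div q = L" using d by simp
        thus ?thesis by (simp add: b_def wv_def \<iota>_def \<kappa>_def imp_def)
      qed
    qed
  qed
  have qb1: "qf \<Psi> K b \<le> 0"
  proof -
    have "QDF q \<Psi> \<kappa> 1 = qf \<Psi> K b" using QDF_qf[OF q0 PK] eq\<kappa> by (simp add: K_def)
    moreover have "QDF q \<Psi> \<kappa> 0 = 0" unfolding \<kappa>_def q_def by (rule QDF_imp_early[OF P S b\<Psi>]) simp
    moreover have "QDF q \<Phi> \<kappa> 0 = 0" unfolding \<kappa>_def q_def by (rule QDF_imp_early[OF P\<Phi> S\<Phi> b\<Phi>]) simp
    moreover have "QDF q (nabla q \<Psi>) \<kappa> 0 = QDF q \<Psi> \<kappa> (Suc 0) - QDF q \<Psi> \<kappa> 0"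
      by (rule QDF_nabla[OF q0 PK])
    ultimately show ?thesis using diss[OF \<kappa>B, of 0] by simp
  qed
  have qb: "qf \<Psi> K b = 0" using qb0 qb1 by simp
  define \<beta> where "\<beta> = (\<Sum>i<K. \<Sum>j<K. v i * \<Psi> $$ (i, j) * b j)"
  have lin: "qf \<Psi> K (\<lambda>r. v r + c * b r) = qf \<Psi> K v + 2 * c * \<beta>" for c
    using qf_add[OF symE, where v=v and c=c and b=b] qb by (simp add: \<beta>_def)
  have \<beta>0: "\<beta> = 0"
  proof (rule ccontr)
    assume ne: "\<beta> \<noteq> 0"
    define c where "c = - (\<bar>qf \<Psi> K v\<bar> + 1) / (2 * \<beta>)"
    have "2 * c * \<beta> = - (\<bar>qf \<Psi> K v\<bar> + 1)" using ne by (simp add: c_def)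
    hence "qf \<Psi> K (\<lambda>r. v r + c * b r) < 0" using lin[of c] by linarith
    thus False using qa[of c] by simp
  qed
  have qd: "qf \<Psi> K (\<lambda>r. v r + (-1) * b r) = qf \<Psi> K v" using lin[of "-1"] \<beta>0 by simp
  have LqK: "Suc L * q \<le> K" using LN unfolding K_def by (intro mult_le_mono1) simp
  have qe: "qf \<Psi> K (Sv K (Smap m p L G) v) = qf \<Psi> K (\<lambda>r. v r + (-1) * b r)"
    unfolding K_def
  proof (rule qf_local_deg[OF q0 PK S[unfolded q_def, folded q_def] b\<Psi>[folded q_def]])
    show "int L \<ge> -1" by simp
    show "\<forall>i<nat (int L + 1) * q. Sv (N * q) (Smap m p L G) v i = v i + (-1) * b i"
    proof (intro allI impI)
      fix i assume "i < nat (int L + 1) * q"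
      hence iL: "i < Suc L * q" by (simp only: nat_intL)
      hence iK: "i < N * q" using LqK by (simp add: K_def)
      have d: "i div q \<le> L" by (rule div_le_of_less[OF iL])
      define a where "a = i mod q"
      have a: "a < q" using q0 by (simp add: a_def)
      show "Sv (N * q) (Smap m p L G) v i = v i + (-1) * b i"
      proof (cases "i < L * q")
        case True
        have "Sv (N * q) (Smap m p L G) v i = (\<Sum>r<N * q. (if i = r then 1 else 0) * v r)"
          unfolding Sv_def Smap_def using True by (simp add: q_def)
        also have "\<dots> = (\<Sum>r<N * q. if i = r then v r else 0)" by (rule sum.cong) auto
        also have "\<dots> = v i" using iK by (simp add: sum.delta)
        finally have sv: "Sv (N * q) (Smap m p L G) v i = v i" .
        have "i div q < L" using True by (simp add: less_mult_imp_div_less)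
        hence "b i = 0" using a by (simp add: b_def wv_def \<iota>_def imp_def a_def q_def)
        thus ?thesis using sv by simp
      next
        case False
        have "L * q div q \<le> i div q" using False by (intro div_le_mono) simp
        hence dL: "i div q = L" using d q0 by simp
        have vi: "v i = w (t + L) $ a" by (simp add: v_def wv_def dL a_def)
        have bi: "b i = mkw m p u0 (D *\<^sub>v u0) $ a" by (simp add: b_def wv_def \<iota>_def imp_def dL a_def)
        show ?thesis
        proof (cases "a < m")
          case True
          have "Sv (N * q) (Smap m p L G) v i = 0"
            unfolding Sv_def Smap_def using False True by (simp add: q_def a_def)
          moreover have "b i = w (t + L) $ a" using bi True a by (simp add: mkw_def u0_def inp_def q_def)
          ultimately show ?thesis using vi by simp
        next
          case am: False
          have am': "a - m < p" using a am by (simp add: q_def)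
          have "Sv (N * q) (Smap m p L G) v i = (\<Sum>r<N * q. (if r < L * q then G (a - m) r else 0) * v r)"
            unfolding Sv_def Smap_def
            by (intro sum.cong refl) (use False am dL in \<open>auto simp: q_def a_def\<close>)
          also have "\<dots> = (\<Sum>r<L * q. G (a - m) r * v r)"
          proof -
            have "(\<Sum>r<N * q. (if r < L * q then G (a - m) r else 0) * v r) = (\<Sum>r<L * q. (if r < L * q then G (a - m) r else 0) * v r)"
              using LN by (intro sum.mono_neutral_right) (auto intro: mult_le_mono1)
            thus ?thesis by simp
          qed
          also have "\<dots> = outp m p (w (t + L)) $ (a - m) - (D *\<^sub>v u0) $ (a - m)"
            using G am' w unfolding v_def u0_def q_def by simp
          finally have sv: "Sv (N * q) (Smap m p L G) v i = outp m p (w (t + L)) $ (a - m) - (D *\<^sub>v u0) $ (a - m)" .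
          have "b i = (D *\<^sub>v u0) $ (a - m)" using bi am a by (simp add: mkw_def q_def)
          moreover have "outp m p (w (t + L)) $ (a - m) = w (t + L) $ a" using am am' by (simp add: outp_def)
          ultimately show ?thesis using sv vi by simp
        qed
      qed
    qed
  qed
  show ?thesis using qe qd by (simp add: K_def q_def v_def)
qed

lemma Smap_zero: "r \<ge> L * (m + p) \<Longrightarrow> Smap m p L G r1 r = 0"
  by (auto simp: Smap_def)

lemma reduce:
  assumes l: "l = (LEAST k. obs_rank p n k C A = obs_rank p n (Suc k) C A)" and L: "l \<le> L"
    and P\<Phi>: "\<Phi> \<in> carrier_mat (N\<Phi> * (m + p)) (N\<Phi> * (m + p))" and S\<Phi>: "transpose_mat \<Phi> = \<Phi>"
    and b\<Phi>: "bz (m + p) \<Phi> (int L)"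
    and P: "\<Psi> \<in> carrier_mat (N * (m + p)) (N * (m + p))" and S: "transpose_mat \<Psi> = \<Psi>"
    and b\<Psi>: "bz (m + p) \<Psi> (int L)"
    and sf: "storage_function m p (behavior m p n A B C D) \<Phi> \<Psi>"
  shows "\<exists>\<Psi>'. storage_function m p (behavior m p n A B C D) \<Phi> \<Psi>' \<and> bz (m + p) \<Psi>' (int L - 1)"
proof (cases "N \<le> L")
  case True
  have "bz (m + p) \<Psi> (int L - 1)"
    unfolding bz_def wlen_carrier[OF q P] using True by auto
  thus ?thesis using sf by blast
next
  case False
  hence LN: "L < N" by simp
  obtain G where G: "\<forall>i<p. \<forall>w\<in>behavior m p n A B C D. \<forall>t.
     outp m p (w (t + L)) $ i - (D *\<^sub>v inp m (w (t + L))) $ i = (\<Sum>r<L * (m + p). G i r * wv (m + p) w t r)"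
    using F_exists[OF A B C D p l L] by blast
  define K where "K = N * (m + p)"
  define \<Psi>' where "\<Psi>' = tmat \<Psi> K (Smap m p L G)"
  have P': "\<Psi>' \<in> carrier_mat (N * (m + p)) (N * (m + p))" unfolding \<Psi>'_def K_def by (rule tmat_carrier)
  have S': "transpose_mat \<Psi>' = \<Psi>'" unfolding \<Psi>'_def
    by (rule tmat_sym) (use sym_entries[OF P S] in \<open>simp add: K_def\<close>)
  have eqQ: "QDF (m + p) \<Psi>' w t = QDF (m + p) \<Psi> w t" if w: "w \<in> behavior m p n A B C D" for w t
  proof -
    have "QDF (m + p) \<Psi>' w t = qf \<Psi>' K (wv (m + p) w t)" unfolding K_def by (rule QDF_qf[OF q P'])
    also have "\<dots> = qf \<Psi> K (Sv K (Smap m p L G) (wv (m + p) w t))" unfolding \<Psi>'_def by (rule qf_tmat)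
    also have "\<dots> = qf \<Psi> K (wv (m + p) w t)"
      unfolding K_def by (rule key_eq[OF l L P\<Phi> S\<Phi> b\<Phi> P S b\<Psi> sf LN G w])
    also have "\<dots> = QDF (m + p) \<Psi> w t" unfolding K_def by (rule QDF_qf[OF q P, symmetric])
    finally show ?thesis .
  qed
  have sf': "storage_function m p (behavior m p n A B C D) \<Phi> \<Psi>'"
    unfolding storage_function_def
  proof (intro conjI ballI allI)
    show "is_coeff (m + p) \<Psi>'" unfolding is_coeff_def using P' S' by blast
  next
    fix w t assume w: "w \<in> behavior m p n A B C D"
    show "QDF (m + p) \<Psi>' w t \<ge> 0" using eqQ[OF w] sf w by (simp add: storage_function_def)
  next
    fix w t assume w: "w \<in> behavior m p n A B C D"
    have "QDF (m + p) (nabla (m + p) \<Psi>') w t = QDF (m + p) \<Psi>' w (Suc t) - QDF (m + p) \<Psi>' w t"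
      by (rule QDF_nabla[OF q P'])
    also have "\<dots> = QDF (m + p) \<Psi> w (Suc t) - QDF (m + p) \<Psi> w t" using eqQ[OF w] by simp
    also have "\<dots> = QDF (m + p) (nabla (m + p) \<Psi>) w t" by (rule QDF_nabla[OF q P, symmetric])
    finally show "QDF (m + p) (nabla (m + p) \<Psi>') w t \<le> QDF (m + p) \<Phi> w t"
      using sf w by (simp add: storage_function_def)
  qed
  have "bz (m + p) \<Psi>' (int L - 1)"
    unfolding bz_def wlen_carrier[OF q P']
  proof (intro allI impI)
    fix i j a b assume ij: "i < N" "j < N" and ab: "a < m + p" "b < m + p" and gt: "int L - 1 < int i"
    have r: "i * (m + p) + a < K" "j * (m + p) + b < K" using idx_lt ij ab by (auto simp: K_def)
    have "L * (m + p) \<le> i * (m + p) + a" using gt by (simp add: trans_le_add1)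
    hence "\<And>r1. Smap m p L G r1 (i * (m + p) + a) = 0" by (rule Smap_zero)
    thus "\<Psi>' $$ (i * (m + p) + a, j * (m + p) + b) = 0" using r by (simp add: \<Psi>'_def tmat_def)
  qed
  thus ?thesis using sf' by blast
qed

end


lemma step_lemma:
  fixes A B C D \<Phi> \<Psi> :: "real mat"
  assumes A: "A \<in> carrier_mat n n" and B: "B \<in> carrier_mat n m" and C: "C \<in> carrier_mat p n"
    and D: "D \<in> carrier_mat p m" and m: "m > 0" and p: "p > 0"
    and l: "l = (LEAST k. obs_rank p n k C A = obs_rank p n (Suc k) C A)" and L: "l \<le> L"
    and c\<Phi>: "is_coeff (m + p) \<Phi>" and d\<Phi>: "qdf_deg (m + p) \<Phi> \<le> int L"
    and sf: "storage_function m p (behavior m p n A B C D) \<Phi> \<Psi>"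
    and d\<Psi>: "qdf_deg (m + p) \<Psi> \<le> int L"
  shows "\<exists>\<Psi>'. storage_function m p (behavior m p n A B C D) \<Phi> \<Psi>' \<and> qdf_deg (m + p) \<Psi>' \<le> int L - 1"
proof -
  have q: "m + p > 0" using p by simp
  obtain N\<Phi> where P\<Phi>: "\<Phi> \<in> carrier_mat (N\<Phi> * (m + p)) (N\<Phi> * (m + p))" and S\<Phi>: "transpose_mat \<Phi> = \<Phi>"
    using c\<Phi> unfolding is_coeff_def by blast
  obtain N where P: "\<Psi> \<in> carrier_mat (N * (m + p)) (N * (m + p))" and S: "transpose_mat \<Psi> = \<Psi>"
    using sf unfolding storage_function_def is_coeff_def by blast
  have b\<Phi>: "bz (m + p) \<Phi> (int L)" using bz_mono[OF qdf_deg_props(2)[OF q] d\<Phi>] .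
  have b\<Psi>: "bz (m + p) \<Psi> (int L)" using bz_mono[OF qdf_deg_props(2)[OF q] d\<Psi>] .
  obtain \<Psi>' where sf': "storage_function m p (behavior m p n A B C D) \<Phi> \<Psi>'" and b': "bz (m + p) \<Psi>' (int L - 1)"
    using reduce[OF A B C D m p l L P\<Phi> S\<Phi> b\<Phi> P S b\<Psi> sf] by blast
  have "qdf_deg (m + p) \<Psi>' \<le> int L - 1" by (rule qdf_deg_props(3)[OF q _ b']) simp
  thus ?thesis using sf' by blast
qed

theorem theorem1:
  fixes m p :: nat and Bh :: "(nat \<Rightarrow> real vec) set" and \<Phi> :: "real mat"
  assumes "m \<ge> 1" and "p \<ge> 1"
    and "Bh \<in> L_class m p"
    and "is_coeff (m + p) \<Phi>"
    and "dissipative m p Bh \<Phi>"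
  shows "\<exists>\<Psi>. storage_function m p Bh \<Phi> \<Psi> \<and>
           qdf_deg (m + p) \<Psi> < max (qdf_deg (m + p) \<Phi>) (int (lag m p Bh))"
proof -
  have m: "m > 0" and p: "p > 0" and q: "m + p > 0" using assms(1,2) by auto
  define r0 where "r0 = (SOME r. is_repr m p Bh r)"
  have "\<exists>r. is_repr m p Bh r" using assms(3) unfolding L_class_def by blast
  hence r0: "is_repr m p Bh r0" unfolding r0_def by (rule someI_ex)
  obtain n A B C D where r0e: "r0 = (n, A, B, C, D)" by (cases r0) auto
  have A: "A \<in> carrier_mat n n" and B: "B \<in> carrier_mat n m" and C: "C \<in> carrier_mat p n"
    and D: "D \<in> carrier_mat p m" and Bh: "Bh = behavior m p n A B C D"
    using r0 unfolding r0e is_repr_def by auto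
  define l where "l = (LEAST k. obs_rank p n k C A = obs_rank p n (Suc k) C A)"
  have lag: "lag m p Bh = l" unfolding lag_def r0_def[symmetric] r0e l_def by simp
  define M where "M = max (qdf_deg (m + p) \<Phi>) (int l)"
  have M0: "M \<ge> 0" by (simp add: M_def)
  have main: "\<forall>\<Psi>. storage_function m p Bh \<Phi> \<Psi> \<and> qdf_deg (m + p) \<Psi> \<le> M + int j \<longrightarrow>
      (\<exists>\<Psi>'. storage_function m p Bh \<Phi> \<Psi>' \<and> qdf_deg (m + p) \<Psi>' < M)" for j
  proof (induction j)
    case 0
    show ?case
    proof (intro allI impI, elim conjE)
      fix \<Psi> assume sf: "storage_function m p Bh \<Phi> \<Psi>" and d: "qdf_deg (m + p) \<Psi> \<le> M + int 0"
      define L where "L = nat M"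
      have LM: "int L = M" using M0 by (simp add: L_def)
      have lL: "l \<le> L" using LM by (simp add: M_def)
      have dP: "qdf_deg (m + p) \<Phi> \<le> int L" using LM by (simp add: M_def)
      obtain \<Psi>' where "storage_function m p Bh \<Phi> \<Psi>'" "qdf_deg (m + p) \<Psi>' \<le> int L - 1"
        using step_lemma[OF A B C D m p l_def lL assms(4) dP sf[unfolded Bh]] d LM by (auto simp: Bh)
      thus "\<exists>\<Psi>'. storage_function m p Bh \<Phi> \<Psi>' \<and> qdf_deg (m + p) \<Psi>' < M" using LM by auto
    qed
  next
    case (Suc j)
    show ?case
    proof (intro allI impI, elim conjE)
      fix \<Psi> assume sf: "storage_function m p Bh \<Phi> \<Psi>" and d: "qdf_deg (m + p) \<Psi> \<le> M + int (Suc j)"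
      define L where "L = nat (M + int (Suc j))"
      have LM: "int L = M + int (Suc j)" using M0 by (simp add: L_def)
      have lL: "l \<le> L" using LM by (simp add: M_def)
      have dP: "qdf_deg (m + p) \<Phi> \<le> int L" using LM by (simp add: M_def)
      obtain \<Psi>' where "storage_function m p Bh \<Phi> \<Psi>'" "qdf_deg (m + p) \<Psi>' \<le> int L - 1"
        using step_lemma[OF A B C D m p l_def lL assms(4) dP sf[unfolded Bh]] d LM by (auto simp: Bh)
      moreover have "int L - 1 = M + int j" using LM by simp
      ultimately show "\<exists>\<Psi>'. storage_function m p Bh \<Phi> \<Psi>' \<and> qdf_deg (m + p) \<Psi>' < M"
        using Suc.IH by auto
    qed
  qed
  obtain \<Psi>0 where sf0: "storage_function m p Bh \<Phi> \<Psi>0" using assms(5) unfolding dissipative_def by blast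
  define j where "j = nat (qdf_deg (m + p) \<Psi>0 + 1)"
  have "qdf_deg (m + p) \<Psi>0 \<le> M + int j" using M0 qdf_deg_props(1)[OF q, of \<Psi>0] by (simp add: j_def)
  hence "\<exists>\<Psi>'. storage_function m p Bh \<Phi> \<Psi>' \<and> qdf_deg (m + p) \<Psi>' < M" using main sf0 by blast
  thus ?thesis unfolding lag M_def .
qed


end
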